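(* Let $\lambda\in(0,1)$ and consider the discounted game $\Gamma_\lambda(p,q)$ with security strategies $\sigma^*$ (player 1) and $\tau^*$ (player 2). Define $u_{l,0;\lambda}(\sigma^* )=\min_{\tau(l)}\mathbb E_{p,\sigma^*,\tau(l)}[\sum_{t=1}^\infty\lambda(1-\lambda)^{t-1}M(k,l,a_t,b_t)\mid l]$ for $l\in L$ and $w_{k,0;\lambda}(\tau^* )=\max_{\sigma(k)}\mathbb E_{q,\sigma(k),\tau^*}[\sum_{t=1}^\infty\lambda(1-\lambda)^{t-1}M(k,l,a_t,b_t)\mid k]$ for $k\in K$. Then $\mu^*$ with $\mu^{*k}=-w_{k,0;\lambda}(\tau^* )$ is an optimal solution of $\min_{\mu\in\mathbb R^{|K|}}\{\tilde V^1_\lambda(\mu,q)-p^T\mu\}$, and $\nu^*$ with $\nu^{*l}=-u_{l,0;\lambda}(\sigma^* )$ is an optimal solution of $\max_{\nu\in\mathbb R^{|L|}}\{\tilde V^2_\lambda(p,\nu)-q^T\nu\}$.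
   Context: Setting: nonempty finite type sets $K,L$, action sets $A,B$, payoff $M:K\times L\times A\times B\to\mathbb R$, $p\in\Delta(K),q\in\Delta(L)$ with positive entries. In $\Gamma_\lambda(p,q)$, $k\sim p$ and $l\sim q$ are drawn independently and told privately to players 1, 2; at each stage $t=1,2,\dots$ they choose actions simultaneously, publicly announced; behavior strategies depend on own type and both histories; payoff to player 1 (maximizer) $\mathbb E[\sum_{t\ge1}\lambda(1-\lambda)^{t-1}M(k,l,a_t,b_t)]$. Security strategies attain $\max_\sigma\min_\tau$ (player 1) resp. $\min_\tau\max_\sigma$ (player 2) of the payoff; minima/maxima over $\tau(l)$ or $\sigma(k)$ are over strategies of a player of the given type. Dual games: $\tilde\Gamma^1_\lambda(\mu,q)$ ($\mu\in\mathbb R^{|K|}$): player 1 chooses his type $k$ himself (hidden), $l\sim q$ drawn by nature and told to player 2, payoff $\mathbb E[\mu^k+\sum_{t\ge1}\lambda(1-\lambda)^{t-1}M]$, value $\tilde V^1_\lambda(\mu,q)$. $\tilde\Gamma^2_\lambda(p,\nu)$ ($\nu\in\mathbb R^{|L|}$): $k\sim p$ by nature, told to player 1; player 2 chooses $l$ himself; payoff $\mathbb E[\nu^l+\sum_{t\ge1}\lambda(1-\lambda)^{t-1}M]$, value $\tilde V^2_\lambda(p,\nu)$. *)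

theory Defs
  imports "HOL-Probability.Probability_Mass_Function"
begin

text \<open>Histories are lists of publicly announced action pairs. A behavior strategy of a
player of a fixed type maps histories to mixed actions.\<close>

type_synonym ('a,'b) hist = "('a \<times> 'b) list"
type_synonym ('a,'b) strat1 = "('a,'b) hist \<Rightarrow> 'a pmf"
type_synonym ('a,'b) strat2 = "('a,'b) hist \<Rightarrow> 'b pmf"

definition prob_simplex :: "('i::finite \<Rightarrow> real) set" where
  "prob_simplex = {x. (\<forall>i. 0 \<le> x i) \<and> sum x UNIV = 1}"

primrec hist_dist :: "('a,'b) strat1 \<Rightarrow> ('a,'b) strat2 \<Rightarrow> nat \<Rightarrow> ('a,'b) hist pmf" where
  "hist_dist s t 0 = return_pmf []"
| "hist_dist s t (Suc n) =
     bind_pmf (hist_dist s t n) (\<lambda>h. map_pmf (\<lambda>ab. h @ [ab]) (pair_pmf (s h) (t h)))"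

text \<open>Expected payoff at stage n+1 for fixed types k, l.\<close>
definition stage_pay :: "('k \<Rightarrow> 'l \<Rightarrow> 'a \<Rightarrow> 'b \<Rightarrow> real) \<Rightarrow> 'k \<Rightarrow> 'l
    \<Rightarrow> ('a,'b) strat1 \<Rightarrow> ('a,'b) strat2 \<Rightarrow> nat \<Rightarrow> real" where
  "stage_pay M k l s t n =
     measure_pmf.expectation (hist_dist s t n)
       (\<lambda>h. measure_pmf.expectation (pair_pmf (s h) (t h)) (\<lambda>(a,b). M k l a b))"

definition disc_pay :: "real \<Rightarrow> ('k \<Rightarrow> 'l \<Rightarrow> 'a \<Rightarrow> 'b \<Rightarrow> real) \<Rightarrow> 'k \<Rightarrow> 'l
    \<Rightarrow> ('a,'b) strat1 \<Rightarrow> ('a,'b) strat2 \<Rightarrow> real" where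
  "disc_pay lam M k l s t = (\<Sum>n. lam * (1 - lam) ^ n * stage_pay M k l s t n)"

definition gamma_pay :: "real \<Rightarrow> ('k::finite \<Rightarrow> 'l::finite \<Rightarrow> 'a \<Rightarrow> 'b \<Rightarrow> real)
    \<Rightarrow> ('k \<Rightarrow> real) \<Rightarrow> ('l \<Rightarrow> real)
    \<Rightarrow> ('k \<Rightarrow> ('a,'b) strat1) \<Rightarrow> ('l \<Rightarrow> ('a,'b) strat2) \<Rightarrow> real" where
  "gamma_pay lam M p q \<sigma> \<tau> = (\<Sum>k\<in>UNIV. \<Sum>l\<in>UNIV. p k * q l * disc_pay lam M k l (\<sigma> k) (\<tau> l))"

definition security1 where
  "security1 lam M p q \<sigma>s \<longleftrightarrow>
     (INF \<tau>. gamma_pay lam M p q \<sigma>s \<tau>) = (SUP \<sigma>. INF \<tau>. gamma_pay lam M p q \<sigma> \<tau>)"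

definition security2 where
  "security2 lam M p q \<tau>s \<longleftrightarrow>
     (SUP \<sigma>. gamma_pay lam M p q \<sigma> \<tau>s) = (INF \<tau>. SUP \<sigma>. gamma_pay lam M p q \<sigma> \<tau>)"

text \<open>u_{l,0;lam}(sigma) = min over strategies of player 2 of type l of the conditional
  expected payoff given l (k ~ p independent of l).\<close>
definition u_val :: "real \<Rightarrow> ('k::finite \<Rightarrow> 'l \<Rightarrow> 'a \<Rightarrow> 'b \<Rightarrow> real) \<Rightarrow> ('k \<Rightarrow> real)
    \<Rightarrow> ('k \<Rightarrow> ('a,'b) strat1) \<Rightarrow> 'l \<Rightarrow> real" where
  "u_val lam M p \<sigma> l = (INF t. \<Sum>k\<in>UNIV. p k * disc_pay lam M k l (\<sigma> k) t)"

text \<open>w_{k,0;lam}(tau) = max over strategies of player 1 of type k of the conditional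
  expected payoff given k (l ~ q independent of k).\<close>
definition w_val :: "real \<Rightarrow> ('k \<Rightarrow> 'l::finite \<Rightarrow> 'a \<Rightarrow> 'b \<Rightarrow> real) \<Rightarrow> ('l \<Rightarrow> real)
    \<Rightarrow> ('l \<Rightarrow> ('a,'b) strat2) \<Rightarrow> 'k \<Rightarrow> real" where
  "w_val lam M q \<tau> k = (SUP s. \<Sum>l\<in>UNIV. q l * disc_pay lam M k l s (\<tau> l))"

text \<open>Dual game 1: player 1 picks his (hidden) type k with a mixed choice pi, and a
  behavior strategy sigma; l ~ q told to player 2. Value taken as sup-inf.\<close>
definition V1_dual :: "real \<Rightarrow> ('k::finite \<Rightarrow> 'l::finite \<Rightarrow> 'a \<Rightarrow> 'b \<Rightarrow> real)
    \<Rightarrow> ('k \<Rightarrow> real) \<Rightarrow> ('l \<Rightarrow> real) \<Rightarrow> real" where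
  "V1_dual lam M \<mu> q =
     (SUP \<pi>\<in>prob_simplex. SUP \<sigma>. INF \<tau>.
        \<Sum>k\<in>UNIV. \<pi> k * (\<mu> k + (\<Sum>l\<in>UNIV. q l * disc_pay lam M k l (\<sigma> k) (\<tau> l))))"

text \<open>Dual game 2: k ~ p told to player 1; player 2 picks his (hidden) type l with a mixed
  choice rho, and a behavior strategy tau. Value taken as sup-inf.\<close>
definition V2_dual :: "real \<Rightarrow> ('k::finite \<Rightarrow> 'l::finite \<Rightarrow> 'a \<Rightarrow> 'b \<Rightarrow> real)
    \<Rightarrow> ('k \<Rightarrow> real) \<Rightarrow> ('l \<Rightarrow> real) \<Rightarrow> real" where
  "V2_dual lam M p \<nu> =
     (SUP \<sigma>. INF \<rho>\<in>prob_simplex. INF \<tau>.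
        \<Sum>k\<in>UNIV. p k * (\<Sum>l\<in>UNIV. \<rho> l * (\<nu> l + disc_pay lam M k l (\<sigma> k) (\<tau> l))))"

end

theory Submission
  imports Defs "HOL-Library.FuncSet"
begin


definition plan :: "('c \<Rightarrow> 'x) \<Rightarrow> ('c list \<Rightarrow> 'x pmf) \<Rightarrow> 'c list \<Rightarrow> real" where
  "plan sel s h = (\<Prod>i<length h. pmf (s (take i h)) (sel (h!i)))"

lemma plan_Nil[simp]: "plan sel s [] = 1"
  by (simp add: plan_def)

lemma plan_snoc: "plan sel s (h @ [x]) = plan sel s h * pmf (s h) (sel x)"
proof -
  have "plan sel s (h @ [x]) = (\<Prod>i<Suc (length h). pmf (s (take i (h@[x]))) (sel ((h@[x])!i)))"
    by (simp add: plan_def)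
  also have "\<dots> = (\<Prod>i<length h. pmf (s (take i (h@[x]))) (sel ((h@[x])!i))) * pmf (s h) (sel x)"
    by (simp add: prod.lessThan_Suc)
  also have "(\<Prod>i<length h. pmf (s (take i (h@[x]))) (sel ((h@[x])!i))) = plan sel s h"
    unfolding plan_def by (rule prod.cong) (auto simp: nth_append)
  finally show ?thesis .
qed

lemma plan_nonneg: "0 \<le> plan sel s h"
  by (simp add: plan_def prod_nonneg)

lemma plan_cong:
  assumes "\<And>i. i < length h \<Longrightarrow> s (take i h) = s' (take i h)"
  shows "plan sel s h = plan sel s' h"
  unfolding plan_def by (rule prod.cong) (auto simp: assms)

lemma pmf_hist:
  "pmf (hist_dist s t n) h = (if length h = n then plan fst s h * plan snd t h else 0)"
proof (induction n arbitrary: h)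
  case 0
  then show ?case by (auto simp: pmf_return)
next
  case (Suc n)
  define F where "F = (\<lambda>h'. map_pmf (\<lambda>ab. h' @ [ab]) (pair_pmf (s h') (t h')))"
  have hd: "hist_dist s t (Suc n) = bind_pmf (hist_dist s t n) F"
    by (simp add: F_def)
  show ?case
  proof (cases h rule: rev_exhaust)
    case Nil
    have "pmf (F h') [] = 0" for h'
      by (auto simp: F_def pmf_eq_0_set_pmf)
    then show ?thesis using Nil unfolding hd pmf_bind by simp
  next
    case (snoc h0 x)
    have inj: "inj (\<lambda>ab. h' @ [ab])" for h' :: "('a \<times> 'b) list"
      by (auto simp: inj_def)
    have Fh: "pmf (F h') h = (if h' = h0 then pmf (s h0) (fst x) * pmf (t h0) (snd x) else 0)" for h'
    proof (cases "h' = h0")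
      case True
      then show ?thesis using snoc
        by (cases x) (simp add: F_def pmf_map_inj'[OF inj] pmf_pair)
    next
      case False
      then show ?thesis using snoc
        by (auto simp: F_def pmf_eq_0_set_pmf)
    qed
    have "pmf (hist_dist s t (Suc n)) h = (\<integral>h'. pmf (F h') h \<partial>measure_pmf (hist_dist s t n))"
      unfolding hd pmf_bind by simp
    also have "\<dots> = (\<Sum>h'\<in>{h0}. pmf (F h') h * pmf (hist_dist s t n) h')"
      by (rule integral_measure_pmf_real) (auto simp: Fh split: if_splits)
    also have "\<dots> = (if length h = Suc n then plan fst s h * plan snd t h else 0)"
      using snoc Fh[of h0] by (simp add: Suc.IH plan_snoc del: One_nat_def)
    finally show ?thesis .
  qed
qed

lemma finite_len: "finite {h :: ('c::finite) list. length h = n}"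
  using finite_lists_length_eq[of "UNIV::'c set" n] by simp

lemma set_pmf_hist: "h \<in> set_pmf (hist_dist s t n) \<Longrightarrow> length h = n"
  by (auto simp: set_pmf_eq pmf_hist split: if_splits)

lemma stage_pay_eq:
  fixes M :: "'k \<Rightarrow> 'l \<Rightarrow> 'a::finite \<Rightarrow> 'b::finite \<Rightarrow> real"
  shows "stage_pay M k l s t n = (\<Sum>h\<in>{h. length h = n}. \<Sum>x\<in>UNIV.
            plan fst s (h@[x]) * plan snd t (h@[x]) * M k l (fst x) (snd x))"
proof -
  have inner: "measure_pmf.expectation (pair_pmf (s h) (t h)) (\<lambda>(a,b). M k l a b)
     = (\<Sum>x\<in>UNIV. pmf (s h) (fst x) * pmf (t h) (snd x) * M k l (fst x) (snd x))" for h
    by (subst integral_measure_pmf_real[where A=UNIV]) (auto simp: pmf_pair split: prod.splits intro!: sum.cong)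
  have "stage_pay M k l s t n = (\<Sum>h\<in>{h. length h = n}. measure_pmf.expectation (pair_pmf (s h) (t h)) (\<lambda>(a,b). M k l a b) * pmf (hist_dist s t n) h)"
    unfolding stage_pay_def
    by (rule integral_measure_pmf_real) (auto simp: finite_len set_pmf_hist)
  also have "\<dots> = (\<Sum>h\<in>{h. length h = n}. \<Sum>x\<in>UNIV.
            plan fst s (h@[x]) * plan snd t (h@[x]) * M k l (fst x) (snd x))"
    by (rule sum.cong) (auto simp: inner pmf_hist plan_snoc sum_distrib_right intro!: sum.cong)
  finally show ?thesis .
qed

lemma stage_lin1:
  fixes M :: "'k \<Rightarrow> 'l \<Rightarrow> 'a::finite \<Rightarrow> 'b::finite \<Rightarrow> real"
  assumes "\<And>h. plan fst s h = (\<Sum>i\<in>I. w i * plan fst (S i) h)"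
  shows "stage_pay M k l s t n = (\<Sum>i\<in>I. w i * stage_pay M k l (S i) t n)"
  unfolding stage_pay_eq assms
  by (simp add: sum_distrib_left sum_distrib_right mult.assoc mult.left_commute sum.swap[of _ I])

lemma stage_lin2:
  fixes M :: "'k \<Rightarrow> 'l \<Rightarrow> 'a::finite \<Rightarrow> 'b::finite \<Rightarrow> real"
  assumes "\<And>h. plan snd t h = (\<Sum>i\<in>I. w i * plan snd (T i) h)"
  shows "stage_pay M k l s t n = (\<Sum>i\<in>I. w i * stage_pay M k l s (T i) n)"
  unfolding stage_pay_eq assms
  by (simp add: sum_distrib_left sum_distrib_right mult.assoc mult.left_commute sum.swap[of _ I])

lemma plan_upd:
  fixes d :: "'x::finite pmf"
  shows "plan sel (s(h0 := d)) h = (\<Sum>x\<in>UNIV. pmf d x * plan sel (s(h0 := return_pmf x)) h)"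
proof (cases "\<exists>i<length h. take i h = h0")
  case False
  have "plan sel (s(h0 := e)) h = plan sel s h" for e
    by (rule plan_cong) (use False in auto)
  moreover have "(\<Sum>x\<in>UNIV. pmf d x) = 1"
    by (rule sum_pmf_eq_1) auto
  ultimately show ?thesis by (simp add: sum_distrib_right[symmetric])
next
  case True
  then obtain i0 where i0: "i0 < length h" "take i0 h = h0" by blast
  have uniq: "take i h = h0 \<longleftrightarrow> i = i0" if "i < length h" for i
    using i0 that by (metis length_take min.absorb4 min.strict_order_iff)
  define R where "R = (\<Prod>i\<in>{..<length h} - {i0}. pmf (s (take i h)) (sel (h!i)))"
  have split: "plan sel (s(h0 := e)) h = pmf e (sel (h!i0)) * R" for e
  proof -
    have "plan sel (s(h0 := e)) h = pmf ((s(h0 := e)) (take i0 h)) (sel (h!i0)) *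
        (\<Prod>i\<in>{..<length h} - {i0}. pmf ((s(h0 := e)) (take i h)) (sel (h!i)))"
      unfolding plan_def by (rule prod.remove) (use i0 in auto)
    also have "(\<Prod>i\<in>{..<length h} - {i0}. pmf ((s(h0 := e)) (take i h)) (sel (h!i))) = R"
      unfolding R_def by (rule prod.cong) (use uniq in auto)
    also have "pmf ((s(h0 := e)) (take i0 h)) (sel (h!i0)) = pmf e (sel (h!i0))"
      using i0 by simp
    finally show ?thesis .
  qed
  have "(\<Sum>x\<in>UNIV. pmf d x * plan sel (s(h0 := return_pmf x)) h)
      = (\<Sum>x\<in>UNIV. (if x = sel (h!i0) then pmf d x * R else 0))"
    by (rule sum.cong) (auto simp: split pmf_return)
  also have "\<dots> = pmf d (sel (h!i0)) * R" by simp
  finally show ?thesis by (simp add: split)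
qed

lemma pmf_bern_bind:
  assumes "0 \<le> b" "b \<le> 1"
  shows "pmf (bind_pmf (bernoulli_pmf b) (\<lambda>c. if c then A else B)) y = b * pmf A y + (1 - b) * pmf B y"
  using assms by (simp add: pmf_bind)

lemma plan_mix2:
  assumes a: "0 \<le> \<alpha>" "\<alpha> \<le> 1"
  shows "\<exists>s. \<forall>h. plan sel s h = \<alpha> * plan sel s1 h + (1-\<alpha>) * plan sel s2 h"
proof -
  define D where "D = (\<lambda>h. \<alpha> * plan sel s1 h + (1-\<alpha>) * plan sel s2 h)"
  define s where "s = (\<lambda>h. if D h = 0 then s1 h else
     bind_pmf (bernoulli_pmf (\<alpha> * plan sel s1 h / D h)) (\<lambda>c. if c then s1 h else s2 h))"
  have P1: "0 \<le> \<alpha> * plan sel s1 h" "0 \<le> (1-\<alpha>) * plan sel s2 h" for h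
    using a by (auto intro!: mult_nonneg_nonneg plan_nonneg)
  have "plan sel s h = D h" for h
  proof (induction h rule: rev_induct)
    case Nil
    then show ?case by (simp add: D_def)
  next
    case (snoc x h)
    show ?case
    proof (cases "D h = 0")
      case True
      then have z: "\<alpha> * plan sel s1 h = 0" "(1-\<alpha>) * plan sel s2 h = 0"
        using P1[of h] unfolding D_def by linarith+
      have "D (h@[x]) = (\<alpha> * plan sel s1 h) * pmf (s1 h) (sel x) + ((1-\<alpha>) * plan sel s2 h) * pmf (s2 h) (sel x)"
        by (simp add: D_def plan_snoc)
      also have "\<dots> = 0" unfolding z by simp
      finally show ?thesis using snoc True by (simp add: plan_snoc)
    next
      case False
      then have Dp: "0 < D h" using P1[of h] unfolding D_def by linarith
      define b where "b = \<alpha> * plan sel s1 h / D h"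
      have b: "0 \<le> b" "b \<le> 1" "1 - b = (1-\<alpha>) * plan sel s2 h / D h"
        using Dp P1[of h] by (auto simp: b_def D_def field_simps)
      have "plan sel s (h@[x]) = D h * (b * pmf (s1 h) (sel x) + (1 - b) * pmf (s2 h) (sel x))"
        using snoc False b by (simp add: plan_snoc s_def pmf_bern_bind b_def)
      also have "\<dots> = (D h * b) * pmf (s1 h) (sel x) + (D h * (1 - b)) * pmf (s2 h) (sel x)"
        by (simp add: algebra_simps)
      also have "D h * b = \<alpha> * plan sel s1 h" using Dp by (simp add: b_def)
      also have "D h * (1 - b) = (1-\<alpha>) * plan sel s2 h" using Dp b(3) by simp
      also have "\<alpha> * plan sel s1 h * pmf (s1 h) (sel x) + (1-\<alpha>) * plan sel s2 h * pmf (s2 h) (sel x) = D (h@[x])"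
        by (simp add: D_def plan_snoc mult.assoc)
      finally show ?thesis .
    qed
  qed
  then show ?thesis unfolding D_def by blast
qed

lemma plan_mixn:
  assumes "finite I" "\<forall>i\<in>I. 0 \<le> w i" "sum w I = 1"
  shows "\<exists>s. \<forall>h. plan sel s h = (\<Sum>i\<in>I. w i * plan sel (S i) h)"
  using assms
proof (induction I arbitrary: w rule: finite_induct)
  case empty
  then show ?case by simp
next
  case (insert i F)
  have wi: "0 \<le> w i" "w i \<le> 1" "sum w F = 1 - w i"
    using insert sum_nonneg[of F w] by auto
  show ?case
  proof (cases "w i = 1")
    case True
    then have "\<forall>j\<in>F. w j = 0" using wi insert.prems(1) sum_nonneg_eq_0_iff[OF insert.hyps(1)] by auto
    then show ?thesis using True insert.hyps by (intro exI[of _ "S i"]) simp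
  next
    case False
    define w' where "w' = (\<lambda>j. w j / (1 - w i))"
    have "\<forall>j\<in>F. 0 \<le> w' j" "sum w' F = 1"
      using insert.prems wi False by (auto simp: w'_def sum_divide_distrib[symmetric])
    from insert.IH[OF this] obtain s' where s': "\<forall>h. plan sel s' h = (\<Sum>j\<in>F. w' j * plan sel (S j) h)" by blast
    obtain s where s: "\<forall>h. plan sel s h = w i * plan sel (S i) h + (1 - w i) * plan sel s' h"
      using plan_mix2[OF wi(1,2)] by blast
    have "plan sel s h = (\<Sum>j\<in>insert i F. w j * plan sel (S j) h)" for h
      using False wi insert.hyps
      by (simp add: s s' sum_distrib_left w'_def)
    then show ?thesis by blast
  qed
qed

lemma purify:
  fixes \<Phi> :: "('c \<Rightarrow> 'x::finite pmf) \<Rightarrow> real"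
  assumes aff: "\<And>s h0 d. \<Phi> (s(h0 := d)) = (\<Sum>x\<in>UNIV. pmf d x * \<Phi> (s(h0 := return_pmf x)))"
    and "finite D"
  shows "\<exists>g. \<Phi> s \<le> \<Phi> (\<lambda>h. if h \<in> D then return_pmf (g h) else s h)"
  using assms(2)
proof (induction D rule: finite_induct)
  case empty
  then show ?case by simp
next
  case (insert h0 D)
  then obtain g where g: "\<Phi> s \<le> \<Phi> (\<lambda>h. if h \<in> D then return_pmf (g h) else s h)" by blast
  define s1 where "s1 = (\<lambda>h. if h \<in> D then return_pmf (g h) else s h)"
  define f where "f = (\<lambda>x. \<Phi> (s1(h0 := return_pmf x)))"
  obtain xm where xm: "f xm = Max (range f)"
  proof -
    have "Max (range f) \<in> range f" by (rule Max_in) auto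
    then obtain x where "Max (range f) = f x" by blast
    then show ?thesis using that[of x] by simp
  qed
  have fle: "f x \<le> f xm" for x using xm by simp
  have "\<Phi> s1 = \<Phi> (s1(h0 := s1 h0))" by simp
  also have "\<dots> = (\<Sum>x\<in>UNIV. pmf (s1 h0) x * f x)" unfolding f_def by (rule aff)
  also have "\<dots> \<le> (\<Sum>x\<in>UNIV. pmf (s1 h0) x * f xm)"
    by (rule sum_mono) (simp add: fle mult_left_mono)
  also have "\<dots> = f xm"
    by (simp add: sum_distrib_right[symmetric] sum_pmf_eq_1)
  finally have "\<Phi> s \<le> f xm" using g s1_def by simp
  moreover have "s1(h0 := return_pmf xm) = (\<lambda>h. if h \<in> insert h0 D then return_pmf ((g(h0 := xm)) h) else s h)"
    using insert.hyps by (auto simp: s1_def)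
  ultimately show ?case unfolding f_def by metis
qed




definition simp_set :: "'x set \<Rightarrow> ('x \<Rightarrow> real) set" where
  "simp_set X = {x. (\<forall>i\<in>X. 0 \<le> x i) \<and> sum x X = 1}"

definition colv :: "'x set \<Rightarrow> ('x \<Rightarrow> 'y \<Rightarrow> real) \<Rightarrow> ('x \<Rightarrow> real) \<Rightarrow> 'y \<Rightarrow> real" where
  "colv X A x j = (\<Sum>i\<in>X. x i * A i j)"
definition rowv :: "'y set \<Rightarrow> ('x \<Rightarrow> 'y \<Rightarrow> real) \<Rightarrow> ('y \<Rightarrow> real) \<Rightarrow> 'x \<Rightarrow> real" where
  "rowv Y A y i = (\<Sum>j\<in>Y. y j * A i j)"
definition lo where "lo X Y A x = Min (colv X A x ` Y)"
definition hi where "hi X Y A y = Max (rowv Y A y ` X)"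
definition v1 where "v1 X Y A = (SUP x\<in>simp_set X. lo X Y A x)"
definition v2 where "v2 X Y A = (INF y\<in>simp_set Y. hi X Y A y)"
definition CC where "CC X Y A = (\<Sum>i\<in>X. \<Sum>j\<in>Y. \<bar>A i j\<bar>)"

lemma simp_le1: "x \<in> simp_set X \<Longrightarrow> finite X \<Longrightarrow> i \<in> X \<Longrightarrow> x i \<le> 1"
  unfolding simp_set_def using member_le_sum[of i X x] by auto

lemma simp_ne: "X \<noteq> {} \<Longrightarrow> finite X \<Longrightarrow> simp_set X \<noteq> {}"
proof -
  assume "X \<noteq> {}" "finite X"
  then obtain i0 where "i0 \<in> X" by blast
  then have "(\<lambda>i. if i = i0 then 1 else 0) \<in> simp_set X"
    using \<open>finite X\<close> by (simp add: simp_set_def)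
  then show ?thesis by blast
qed

lemma colv_bound:
  assumes "x \<in> simp_set X" "finite X" "finite Y" "j \<in> Y"
  shows "\<bar>colv X A x j\<bar> \<le> CC X Y A"
proof -
  have "\<bar>colv X A x j\<bar> \<le> (\<Sum>i\<in>X. \<bar>x i * A i j\<bar>)"
    unfolding colv_def by (rule sum_abs)
  also have "\<dots> \<le> (\<Sum>i\<in>X. \<bar>A i j\<bar>)"
  proof (rule sum_mono)
    fix i assume "i \<in> X"
    then have "0 \<le> x i" "x i \<le> 1"
      using assms(1) simp_le1[OF assms(1)] assms by (auto simp: simp_set_def)
    then show "\<bar>x i * A i j\<bar> \<le> \<bar>A i j\<bar>"
      by (simp add: abs_mult mult_left_le_one_le)
  qed
  also have "\<dots> \<le> CC X Y A"
    unfolding CC_def by (rule sum_mono) (rule member_le_sum[of j Y "\<lambda>j. \<bar>A _ j\<bar>"], use assms in auto)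
  finally show ?thesis .
qed

lemma rowv_bound:
  assumes "y \<in> simp_set Y" "finite X" "finite Y" "i \<in> X"
  shows "\<bar>rowv Y A y i\<bar> \<le> CC X Y A"
proof -
  have "\<bar>rowv Y A y i\<bar> \<le> (\<Sum>j\<in>Y. \<bar>y j * A i j\<bar>)"
    unfolding rowv_def by (rule sum_abs)
  also have "\<dots> \<le> (\<Sum>j\<in>Y. \<bar>A i j\<bar>)"
  proof (rule sum_mono)
    fix j assume "j \<in> Y"
    then have "0 \<le> y j" "y j \<le> 1"
      using assms(1) simp_le1[OF assms(1)] assms by (auto simp: simp_set_def)
    then show "\<bar>y j * A i j\<bar> \<le> \<bar>A i j\<bar>"
      by (simp add: abs_mult mult_left_le_one_le)
  qed
  also have "\<dots> \<le> CC X Y A"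
    unfolding CC_def by (rule member_le_sum) (use assms in auto)
  finally show ?thesis .
qed

context
  fixes X :: "'x set" and Y :: "'y set" and A :: "'x \<Rightarrow> 'y \<Rightarrow> real"
  assumes fX: "finite X" and fY: "finite Y" and nX: "X \<noteq> {}" and nY: "Y \<noteq> {}"
begin

lemma lo_le: "j \<in> Y \<Longrightarrow> lo X Y A x \<le> colv X A x j"
  unfolding lo_def using fY by (simp add: Min_le)
lemma lo_gt: "c < lo X Y A x \<longleftrightarrow> (\<forall>j\<in>Y. c < colv X A x j)"
  unfolding lo_def using fY nY by simp
lemma hi_ge: "i \<in> X \<Longrightarrow> rowv Y A y i \<le> hi X Y A y"
  unfolding hi_def using fX by simp
lemma hi_lt: "hi X Y A y < c \<longleftrightarrow> (\<forall>i\<in>X. rowv Y A y i < c)"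
  unfolding hi_def using fX nX by simp

lemma lo_bound: "x \<in> simp_set X \<Longrightarrow> \<bar>lo X Y A x\<bar> \<le> CC X Y A"
proof -
  assume x: "x \<in> simp_set X"
  have "lo X Y A x \<in> colv X A x ` Y" unfolding lo_def using fY nY by (intro Min_in) auto
  then obtain j where j: "j \<in> Y" "lo X Y A x = colv X A x j" by blast
  then show ?thesis using colv_bound[where A=A, OF x fX fY j(1)] by simp
qed

lemma hi_bound: "y \<in> simp_set Y \<Longrightarrow> \<bar>hi X Y A y\<bar> \<le> CC X Y A"
proof -
  assume y: "y \<in> simp_set Y"
  have "hi X Y A y \<in> rowv Y A y ` X" unfolding hi_def using fX nX by (intro Max_in) auto
  then obtain i where i: "i \<in> X" "hi X Y A y = rowv Y A y i" by blast
  then show ?thesis using rowv_bound[where A=A, OF y fX fY i(1)] by simp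
qed

lemma bdd_lo: "bdd_above (lo X Y A ` simp_set X)"
  by (rule bdd_aboveI[of _ "CC X Y A"]) (use lo_bound in fastforce)
lemma bdd_hi: "bdd_below (hi X Y A ` simp_set Y)"
  by (rule bdd_belowI[of _ "- CC X Y A"]) (use hi_bound in fastforce)

lemma v1_ge: "x \<in> simp_set X \<Longrightarrow> lo X Y A x \<le> v1 X Y A"
  unfolding v1_def by (rule cSUP_upper[OF _ bdd_lo])
lemma v2_le: "y \<in> simp_set Y \<Longrightarrow> v2 X Y A \<le> hi X Y A y"
  unfolding v2_def by (rule cINF_lower[OF bdd_hi])
lemma v1_approx: "c < v1 X Y A \<Longrightarrow> \<exists>x\<in>simp_set X. c < lo X Y A x"
  unfolding v1_def using less_cSUP_iff[OF simp_ne[OF nX fX] bdd_lo] by blast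
lemma v2_approx: "v2 X Y A < c \<Longrightarrow> \<exists>y\<in>simp_set Y. hi X Y A y < c"
  unfolding v2_def using cINF_less_iff[OF simp_ne[OF nY fY] bdd_hi] by blast

end


lemma colv_comb: "colv X A (\<lambda>i. t * x' i + (1-t) * x0 i) j = t * colv X A x' j + (1-t) * colv X A x0 j"
  unfolding colv_def sum_distrib_left sum.distrib[symmetric] by (rule sum.cong) (simp_all add: algebra_simps)
lemma rowv_comb: "rowv Y A (\<lambda>i. t * x' i + (1-t) * x0 i) j = t * rowv Y A x' j + (1-t) * rowv Y A x0 j"
  unfolding rowv_def sum_distrib_left sum.distrib[symmetric] by (rule sum.cong) (simp_all add: algebra_simps)
lemma simp_comb: "x' \<in> simp_set X \<Longrightarrow> x0 \<in> simp_set X \<Longrightarrow> 0 \<le> t \<Longrightarrow> t \<le> 1 \<Longrightarrow>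
   (\<lambda>i. t * x' i + (1-t) * x0 i) \<in> simp_set X"
  unfolding simp_set_def by (auto simp: sum.distrib sum_distrib_left[symmetric])

lemma simp_ext0:
  assumes "y' \<in> simp_set (Y - {j0})" "finite Y"
  shows "y'(j0 := 0) \<in> simp_set Y"
proof -
  have "sum (y'(j0 := 0)) Y = sum (y'(j0 := 0)) (Y - {j0})"
    using assms(2) by (cases "j0 \<in> Y") (auto simp: sum.remove)
  also have "\<dots> = sum y' (Y - {j0})" by (rule sum.cong) auto
  finally show ?thesis using assms(1) unfolding simp_set_def by auto
qed

lemma rowv_ext0: "finite Y \<Longrightarrow> rowv Y A (y'(j0 := 0)) i = rowv (Y - {j0}) A y' i"
  unfolding rowv_def by (cases "j0 \<in> Y") (auto simp: sum.remove intro!: sum.cong)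
lemma colv_ext0: "finite X \<Longrightarrow> colv X A (x'(i0 := 0)) j = colv (X - {i0}) A x' j"
  unfolding colv_def by (cases "i0 \<in> X") (auto simp: sum.remove intro!: sum.cong)

lemma minimax_ind:
  "card X + card Y = n \<Longrightarrow> finite X \<Longrightarrow> finite Y \<Longrightarrow> X \<noteq> {} \<Longrightarrow> Y \<noteq> {} \<Longrightarrow>
   v2 X Y A \<le> v1 X Y A"
proof (induction n arbitrary: X Y A rule: less_induct)
  case (less n X Y A)
  note F = less.prems(2-5)
  show ?case
  proof (rule ccontr)
    assume "\<not> ?case"
    define a where "a = v1 X Y A"
    define b where "b = v2 X Y A"
    have ab: "a < b" using \<open>\<not> ?case\<close> by (simp add: a_def b_def)
    define \<delta> where "\<delta> = b - a"
    define C where "C = CC X Y A"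
    have C0: "0 \<le> C" unfolding C_def CC_def by (auto intro!: sum_nonneg)
    define aa where "aa = \<bar>a\<bar>"
    define bb where "bb = \<bar>b\<bar>"
    have aab: "a \<le> aa" "- b \<le> bb" "0 \<le> aa" "0 \<le> bb" by (auto simp: aa_def bb_def)
    define K where "K = aa + bb + \<delta> + C + 1"
    have dp: "0 < \<delta>" using ab by (simp add: \<delta>_def)
    have Kp: "0 < K" "\<delta> < K" using C0 dp aab by (auto simp: K_def)
    define t where "t = \<delta> / (6 * K)"
    have tK: "t * K = \<delta> / 6" using Kp by (simp add: t_def)
    have tp: "0 < t" using dp Kp by (simp add: t_def)
    have t1: "t < 1" using Kp dp by (simp add: t_def)
    define \<eta> where "\<eta> = t * \<delta> / 4"
    have ep: "0 < \<eta>" using tp dp by (simp add: \<eta>_def)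
    have "t * (aa + \<delta> + C) \<le> t * K" "t * (bb + \<delta> + C) \<le> t * K"
      using tp aab by (auto simp: K_def intro!: mult_left_mono)
    then have tbnd: "t * (aa + \<delta> + C) \<le> \<delta> / 6" "t * (bb + \<delta> + C) \<le> \<delta> / 6"
      using tK by auto
    obtain x0 where x0: "x0 \<in> simp_set X" "a - \<eta> < lo X Y A x0"
      using v1_approx[OF F, where A=A and c="a - \<eta>"] ep by (auto simp: a_def)
    obtain y0 where y0: "y0 \<in> simp_set Y" "hi X Y A y0 < b + \<eta>"
      using v2_approx[OF F, where A=A and c="b + \<eta>"] ep by (auto simp: b_def)
    have x0c: "\<forall>j\<in>Y. a - \<eta> < colv X A x0 j" using x0(2) lo_gt[OF F] by blast
    have y0r: "\<forall>i\<in>X. rowv Y A y0 i < b + \<eta>" using y0(2) hi_lt[OF F] by blast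
    have swap: "(\<Sum>j\<in>Y. y0 j * colv X A x0 j) = (\<Sum>i\<in>X. x0 i * rowv Y A y0 i)"
      unfolding colv_def rowv_def
      by (simp add: sum_distrib_left mult_ac sum.swap[of _ Y])
    consider (col) j0 where "j0 \<in> Y" "a + \<delta>/3 < colv X A x0 j0"
      | (row) i0 where "i0 \<in> X" "rowv Y A y0 i0 < b - \<delta>/3"
      | (none) "\<forall>j\<in>Y. colv X A x0 j \<le> a + \<delta>/3" "\<forall>i\<in>X. b - \<delta>/3 \<le> rowv Y A y0 i"
      by (meson not_le)
    then show False
    proof cases
      case none
      have "(\<Sum>j\<in>Y. y0 j * colv X A x0 j) \<le> (\<Sum>j\<in>Y. y0 j * (a + \<delta>/3))"
        using none(1) y0(1) by (intro sum_mono mult_left_mono) (auto simp: simp_set_def)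
      also have "\<dots> = a + \<delta>/3" using y0(1) by (simp add: simp_set_def sum_distrib_right[symmetric])
      finally have 1: "(\<Sum>j\<in>Y. y0 j * colv X A x0 j) \<le> a + \<delta>/3" .
      have "(\<Sum>i\<in>X. x0 i * (b - \<delta>/3)) \<le> (\<Sum>i\<in>X. x0 i * rowv Y A y0 i)"
        using none(2) x0(1) by (intro sum_mono mult_left_mono) (auto simp: simp_set_def)
      moreover have "(\<Sum>i\<in>X. x0 i * (b - \<delta>/3)) = b - \<delta>/3"
        using x0(1) by (simp add: simp_set_def sum_distrib_right[symmetric])
      ultimately show False using 1 swap dp \<delta>_def by linarith
    next
      case col
      show False
      proof (cases "Y - {j0} = {}")
        case True
        then have "Y = {j0}" using col by auto
        then have "a < lo X Y A x0" using lo_gt[OF F] col dp by auto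
        then show False using v1_ge[where A=A, OF F x0(1)] by (simp add: a_def)
      next
        case False
        have lt: "card X + card (Y - {j0}) < n"
          using card_Diff1_less[OF F(2) col(1)] less.prems(1) by linarith
        have IH: "v2 X (Y - {j0}) A \<le> v1 X (Y - {j0}) A"
          using less.IH[OF lt refl] F False by auto
        have "b \<le> v2 X (Y - {j0}) A"
          unfolding v2_def
        proof (rule cINF_greatest)
          show "simp_set (Y - {j0}) \<noteq> {}" using simp_ne[of "Y - {j0}"] False F by auto
          fix y' assume y': "y' \<in> simp_set (Y - {j0})"
          have "hi X Y A (y'(j0 := 0)) = hi X (Y - {j0}) A y'"
            unfolding hi_def using F by (simp add: rowv_ext0)
          then show "b \<le> hi X (Y - {j0}) A y'"
            using v2_le[where A=A, OF F simp_ext0[OF y' F(2)]] by (simp add: b_def)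
        qed
        then have "a + \<delta>/2 < v1 X (Y - {j0}) A" using IH dp \<delta>_def by linarith
        then obtain x' where x': "x' \<in> simp_set X" "a + \<delta>/2 < lo X (Y - {j0}) A x'"
          using v1_approx[of X "Y - {j0}"] F False by blast
        have x'c: "\<forall>j\<in>Y - {j0}. a + \<delta>/2 < colv X A x' j"
          using x'(2) lo_gt[of X "Y - {j0}"] F False by blast
        define xt where "xt = (\<lambda>i. t * x' i + (1-t) * x0 i)"
        have xt: "xt \<in> simp_set X" unfolding xt_def using simp_comb[OF x'(1) x0(1)] tp t1 by simp
        have "\<forall>j\<in>Y. a < colv X A xt j"
        proof
          fix j assume j: "j \<in> Y"
          have e: "colv X A xt j = t * colv X A x' j + (1-t) * colv X A x0 j"
            unfolding xt_def by (rule colv_comb)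
          show "a < colv X A xt j"
          proof (cases "j = j0")
            case True
            have "- C \<le> colv X A x' j" using colv_bound[where A=A, OF x'(1) F(1,2) j] by (simp add: C_def)
            then have 1: "t * (- C) \<le> t * colv X A x' j" using tp by (intro mult_left_mono) auto
            have 2: "(1-t) * (a + \<delta>/3) \<le> (1-t) * colv X A x0 j"
              using col True t1 by (intro mult_left_mono) auto
            have 3: "t * a \<le> t * aa" using tp aab by (intro mult_left_mono) auto
            have "(1-t) * (a + \<delta>/3) = a + \<delta>/3 - t * a - t * \<delta>/3" by (simp add: field_simps)
            moreover have "t * (aa + \<delta> + C) = t * aa + t * \<delta> + t * C" by (simp add: algebra_simps)
            moreover have "0 \<le> t * \<delta>" using tp dp by simp
            moreover have "t * (- C) = - (t * C)" by simp
            ultimately show ?thesis using e 1 2 3 tbnd(1) dp by linarith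
          next
            case False
            then have "a + \<delta>/2 < colv X A x' j" using x'c j by blast
            then have 1: "t * (a + \<delta>/2) \<le> t * colv X A x' j"
              using tp by (intro mult_left_mono) auto
            have 2: "(1-t) * (a - \<eta>) \<le> (1-t) * colv X A x0 j"
              using x0c j t1 by (intro mult_left_mono) auto
            have "t * (a + \<delta>/2) + (1-t) * (a - \<eta>) = a + t * \<delta>/2 - \<eta> + t * \<eta>"
              by (simp add: field_simps)
            moreover have "0 \<le> t * \<eta>" using tp ep by simp
            moreover have "t * \<delta> / 2 - \<eta> = t * \<delta> / 4" by (simp add: \<eta>_def)
            moreover have "0 < t * \<delta>" using tp dp by simp
            ultimately show ?thesis using e 1 2 by linarith
          qed
        qed
        then have "a < lo X Y A xt" using lo_gt[OF F] by blast
        then show False using v1_ge[where A=A, OF F xt] by (simp add: a_def)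
      qed
    next
      case row
      show False
      proof (cases "X - {i0} = {}")
        case True
        then have "X = {i0}" using row by auto
        then have "hi X Y A y0 < b" using hi_lt[OF F] row dp by auto
        then show False using v2_le[where A=A, OF F y0(1)] by (simp add: b_def)
      next
        case False
        have lt: "card (X - {i0}) + card Y < n"
          using card_Diff1_less[OF F(1) row(1)] less.prems(1) by linarith
        have IH: "v2 (X - {i0}) Y A \<le> v1 (X - {i0}) Y A"
          using less.IH[OF lt refl] F False by auto
        have "v1 (X - {i0}) Y A \<le> a"
          unfolding v1_def
        proof (rule cSUP_least)
          show "simp_set (X - {i0}) \<noteq> {}" using simp_ne[of "X - {i0}"] False F by auto
          fix x' assume x': "x' \<in> simp_set (X - {i0})"
          have "lo X Y A (x'(i0 := 0)) = lo (X - {i0}) Y A x'"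
            unfolding lo_def using F by (simp add: colv_ext0)
          then show "lo (X - {i0}) Y A x' \<le> a"
            using v1_ge[where A=A, OF F simp_ext0[OF x' F(1)]] by (simp add: a_def)
        qed
        then have "v2 (X - {i0}) Y A < b - \<delta>/2" using IH dp \<delta>_def by linarith
        then obtain y' where y': "y' \<in> simp_set Y" "hi (X - {i0}) Y A y' < b - \<delta>/2"
          using v2_approx[of "X - {i0}" Y] F False by blast
        have y'r: "\<forall>i\<in>X - {i0}. rowv Y A y' i < b - \<delta>/2"
          using y'(2) hi_lt[of "X - {i0}" Y] F False by blast
        define yt where "yt = (\<lambda>i. t * y' i + (1-t) * y0 i)"
        have yt: "yt \<in> simp_set Y" unfolding yt_def using simp_comb[OF y'(1) y0(1)] tp t1 by simp
        have "\<forall>i\<in>X. rowv Y A yt i < b"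
        proof
          fix i assume i: "i \<in> X"
          have e: "rowv Y A yt i = t * rowv Y A y' i + (1-t) * rowv Y A y0 i"
            unfolding yt_def by (rule rowv_comb)
          show "rowv Y A yt i < b"
          proof (cases "i = i0")
            case True
            have "rowv Y A y' i \<le> C" using rowv_bound[where A=A, OF y'(1) F(1,2) i] by (simp add: C_def)
            then have 1: "t * rowv Y A y' i \<le> t * C" using tp by (intro mult_left_mono) auto
            have 2: "(1-t) * rowv Y A y0 i \<le> (1-t) * (b - \<delta>/3)"
              using row True t1 by (intro mult_left_mono) auto
            have 3: "- (t * b) \<le> t * bb" using tp aab mult_left_mono[of "-b" bb t] by simp
            have "(1-t) * (b - \<delta>/3) = b - \<delta>/3 - t * b + t * \<delta>/3" by (simp add: field_simps)
            moreover have "t * (bb + \<delta> + C) = t * bb + t * \<delta> + t * C" by (simp add: algebra_simps)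
            moreover have "0 \<le> t * \<delta>" using tp dp by simp
            ultimately show ?thesis using e 1 2 3 tbnd(2) dp by linarith
          next
            case False
            then have "rowv Y A y' i < b - \<delta>/2" using y'r i by blast
            then have 1: "t * rowv Y A y' i \<le> t * (b - \<delta>/2)"
              using tp by (intro mult_left_mono) auto
            have 2: "(1-t) * rowv Y A y0 i \<le> (1-t) * (b + \<eta>)"
              using y0r i t1 by (intro mult_left_mono) auto
            have "t * (b - \<delta>/2) + (1-t) * (b + \<eta>) = b - t * \<delta>/2 + \<eta> - t * \<eta>"
              by (simp add: field_simps)
            moreover have "0 \<le> t * \<eta>" using tp ep by simp
            moreover have "t * \<delta> / 2 - \<eta> = t * \<delta> / 4" by (simp add: \<eta>_def)
            moreover have "0 < t * \<delta>" using tp dp by simp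
            ultimately show ?thesis using e 1 2 by linarith
          qed
        qed
        then have "hi X Y A yt < b" using hi_lt[OF F] by blast
        then show False using v2_le[where A=A, OF F yt] by (simp add: b_def)
      qed
    qed
  qed
qed

lemma minimax_saddle:
  assumes F: "finite X" "finite Y" "X \<noteq> {}" "Y \<noteq> {}" and d: "0 < d"
  shows "\<exists>x\<in>simp_set X. \<exists>y\<in>simp_set Y. \<forall>i\<in>X. \<forall>j\<in>Y.
           rowv Y A y i \<le> colv X A x j + d"
proof -
  have le: "v2 X Y A \<le> v1 X Y A" using minimax_ind[OF refl F] .
  obtain x where x: "x \<in> simp_set X" "v1 X Y A - d/2 < lo X Y A x"
    using v1_approx[OF F, where A=A and c="v1 X Y A - d/2"] d by auto
  obtain y where y: "y \<in> simp_set Y" "hi X Y A y < v2 X Y A + d/2"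
    using v2_approx[OF F, where A=A and c="v2 X Y A + d/2"] d by auto
  have "rowv Y A y i \<le> colv X A x j + d" if "i \<in> X" "j \<in> Y" for i j
    using hi_ge[OF F that(1), of A y] lo_le[OF F that(2), of A x] x y le by linarith
  then show ?thesis using x y by blast
qed




definition Bnd :: "('k::finite \<Rightarrow> 'l::finite \<Rightarrow> 'a::finite \<Rightarrow> 'b::finite \<Rightarrow> real) \<Rightarrow> real" where
  "Bnd M = Max (range (\<lambda>(k,l,a,b). \<bar>M k l a b\<bar>))"

lemma Bnd_ge: "\<bar>M k l a b\<bar> \<le> Bnd M"
  unfolding Bnd_def by (rule Max_ge) (auto intro: image_eqI[of _ _ "(k,l,a,b)"])

lemma Bnd_nonneg: "0 \<le> Bnd M"
  using Bnd_ge[of M] abs_ge_zero order.trans by metis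

lemma exp_bound:
  fixes f :: "'x \<Rightarrow> real"
  assumes "\<And>x. \<bar>f x\<bar> \<le> B"
  shows "\<bar>measure_pmf.expectation D f\<bar> \<le> B"
proof -
  have int: "integrable (measure_pmf D) f"
    by (rule measure_pmf.integrable_const_bound[where B=B]) (use assms in auto)
  have "measure_pmf.expectation D f \<le> B"
    by (rule measure_pmf.integral_le_const[OF int]) (use assms abs_le_D1 in auto)
  moreover have "- B \<le> measure_pmf.expectation D f"
  proof (rule measure_pmf.integral_ge_const[OF int], rule AE_I2)
    fix x show "- B \<le> f x" using abs_le_D2[OF assms[of x]] by linarith
  qed
  ultimately show ?thesis by simp
qed

lemma stage_bound: "\<bar>stage_pay M k l s t n\<bar> \<le> Bnd M"
  unfolding stage_pay_def
  by (intro exp_bound) (auto simp: Bnd_ge split: prod.splits)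

definition trunc where
  "trunc lam M k l N s t = (\<Sum>n<N. lam * (1-lam)^n * stage_pay M k l s t n)"

context
  fixes lam :: real
  assumes l0: "0 < lam" and l1: "lam < 1"
begin

lemma geo_sums: "(\<lambda>n. lam * (1-lam)^(n+N) * B) sums ((1-lam)^N * B)"
proof -
  have "(\<lambda>n. (1-lam)^n) sums (1 / (1 - (1-lam)))"
    by (rule geometric_sums) (use l0 l1 in auto)
  then have "(\<lambda>n. (lam * (1-lam)^N * B) * (1-lam)^n) sums ((lam * (1-lam)^N * B) * (1 / (1 - (1-lam))))"
    by (rule sums_mult)
  moreover have "(lam * (1-lam)^N * B) * (1 / (1 - (1-lam))) = (1-lam)^N * B" using l0 by simp
  ultimately show ?thesis using l0 by (simp add: power_add mult_ac)
qed

lemma stage_summable: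
  fixes M :: "'k::finite \<Rightarrow> 'l::finite \<Rightarrow> 'a::finite \<Rightarrow> 'b::finite \<Rightarrow> real"
  shows "summable (\<lambda>n. lam * (1-lam)^n * stage_pay M k l s t n)"
proof (rule summable_comparison_test)
  show "\<exists>N. \<forall>n\<ge>N. norm (lam * (1-lam)^n * stage_pay M k l s t n) \<le> lam * (1-lam)^(n+0) * Bnd M"
    using l0 l1 stage_bound[of M k l s t] by (auto simp: abs_mult intro!: mult_left_mono)
  show "summable (\<lambda>n. lam * (1-lam)^(n+0) * Bnd M)"
    using geo_sums by (rule sums_summable)
qed

lemma trunc_err:
  fixes M :: "'k::finite \<Rightarrow> 'l::finite \<Rightarrow> 'a::finite \<Rightarrow> 'b::finite \<Rightarrow> real"
  shows "\<bar>disc_pay lam M k l s t - trunc lam M k l N s t\<bar> \<le> (1-lam)^N * Bnd M"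
proof -
  define f where "f = (\<lambda>n. lam * (1-lam)^n * stage_pay M k l s t n)"
  have sf: "summable f" unfolding f_def by (rule stage_summable)
  have eq: "disc_pay lam M k l s t - trunc lam M k l N s t = (\<Sum>n. f (n + N))"
    using suminf_split_initial_segment[OF sf, of N]
    unfolding disc_pay_def trunc_def f_def by simp
  have sf': "summable (\<lambda>n. f (n + N))" using sf by (simp add: summable_iff_shift)
  have bnd: "\<bar>f (n + N)\<bar> \<le> lam * (1-lam)^(n+N) * Bnd M" for n
    using l0 l1 stage_bound[of M k l s t] by (auto simp: f_def abs_mult intro!: mult_left_mono)
  have b1: "\<And>n. f (n+N) \<le> lam * (1-lam)^(n+N) * Bnd M" by (metis abs_le_D1 bnd)
  have b2: "\<And>n. - (lam * (1-lam)^(n+N) * Bnd M) \<le> f (n+N)" by (metis abs_le_D2 bnd minus_le_iff)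
  have sg: "summable (\<lambda>n. lam * (1-lam)^(n+N) * Bnd M)" by (rule sums_summable[OF geo_sums])
  have "(\<Sum>n. f (n + N)) \<le> (\<Sum>n. lam * (1-lam)^(n+N) * Bnd M)"
    by (rule suminf_le[OF b1 sf' sg])
  moreover have "(\<Sum>n. - (lam * (1-lam)^(n+N) * Bnd M)) \<le> (\<Sum>n. f (n + N))"
    by (rule suminf_le[OF b2 summable_minus[OF sg] sf'])
  moreover have "(\<Sum>n. lam * (1-lam)^(n+N) * Bnd M) = (1-lam)^N * Bnd M"
    using geo_sums sums_unique by metis
  moreover have "(\<Sum>n. - (lam * (1-lam)^(n+N) * Bnd M)) = - ((1-lam)^N * Bnd M)"
    using sums_minus[OF geo_sums] sums_unique by metis
  ultimately show ?thesis unfolding eq by linarith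
qed

lemma disc_bound:
  fixes M :: "'k::finite \<Rightarrow> 'l::finite \<Rightarrow> 'a::finite \<Rightarrow> 'b::finite \<Rightarrow> real"
  shows "\<bar>disc_pay lam M k l s t\<bar> \<le> Bnd M"
  using trunc_err[of M k l s t 0] by (simp add: trunc_def)

end

lemma trunc_lin1:
  fixes M :: "'k \<Rightarrow> 'l \<Rightarrow> 'a::finite \<Rightarrow> 'b::finite \<Rightarrow> real"
  assumes "\<And>h. plan fst s h = (\<Sum>i\<in>I. w i * plan fst (S i) h)"
  shows "trunc lam M k l N s t = (\<Sum>i\<in>I. w i * trunc lam M k l N (S i) t)"
  unfolding trunc_def stage_lin1[OF assms]
  by (simp add: sum_distrib_left mult_ac sum.swap[of _ I])

lemma trunc_lin2:
  fixes M :: "'k \<Rightarrow> 'l \<Rightarrow> 'a::finite \<Rightarrow> 'b::finite \<Rightarrow> real"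
  assumes "\<And>h. plan snd t h = (\<Sum>i\<in>I. w i * plan snd (T i) h)"
  shows "trunc lam M k l N s t = (\<Sum>i\<in>I. w i * trunc lam M k l N s (T i))"
  unfolding trunc_def stage_lin2[OF assms]
  by (simp add: sum_distrib_left mult_ac sum.swap[of _ I])

lemma trunc_upd1:
  fixes M :: "'k \<Rightarrow> 'l \<Rightarrow> 'a::finite \<Rightarrow> 'b::finite \<Rightarrow> real"
  shows "trunc lam M k l N (s(h0 := d)) t = (\<Sum>a\<in>UNIV. pmf d a * trunc lam M k l N (s(h0 := return_pmf a)) t)"
  by (rule trunc_lin1) (rule plan_upd)

lemma trunc_upd2:
  fixes M :: "'k \<Rightarrow> 'l \<Rightarrow> 'a::finite \<Rightarrow> 'b::finite \<Rightarrow> real"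
  shows "trunc lam M k l N s (t(h0 := d)) = (\<Sum>b\<in>UNIV. pmf d b * trunc lam M k l N s (t(h0 := return_pmf b)))"
  by (rule trunc_lin2) (rule plan_upd)

lemma trunc_cong1:
  fixes M :: "'k \<Rightarrow> 'l \<Rightarrow> 'a::finite \<Rightarrow> 'b::finite \<Rightarrow> real"
  assumes "\<And>h. length h < N \<Longrightarrow> s h = s' h"
  shows "trunc lam M k l N s t = trunc lam M k l N s' t"
proof -
  have "stage_pay M k l s t n = stage_pay M k l s' t n" if "n < N" for n
    unfolding stage_pay_eq
    by (intro sum.cong refl arg_cong2[where f="(*)"] arg_cong2[where f="(*)"] plan_cong)
       (use that in \<open>auto intro!: assms\<close>)
  then show ?thesis unfolding trunc_def by simp
qed

lemma trunc_cong2: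
  fixes M :: "'k \<Rightarrow> 'l \<Rightarrow> 'a::finite \<Rightarrow> 'b::finite \<Rightarrow> real"
  assumes "\<And>h. length h < N \<Longrightarrow> t h = t' h"
  shows "trunc lam M k l N s t = trunc lam M k l N s t'"
proof -
  have "stage_pay M k l s t n = stage_pay M k l s t' n" if "n < N" for n
    unfolding stage_pay_eq
    by (intro sum.cong refl arg_cong2[where f="(*)"] arg_cong2[where f="(*)"] plan_cong)
       (use that in \<open>auto intro!: assms\<close>)
  then show ?thesis unfolding trunc_def by simp
qed




definition GN where
  "GN lam M p q N \<sigma> \<tau> = (\<Sum>k\<in>UNIV. \<Sum>l\<in>UNIV. p k * q l * trunc lam M k l N (\<sigma> k) (\<tau> l))"
definition Xs :: "nat \<Rightarrow> ('k \<times> ('a,'b) hist \<Rightarrow> 'x) set" where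
  "Xs N = PiE (UNIV \<times> {h. length h < N}) (\<lambda>_. UNIV)"
definition pure :: "('k \<times> ('a,'b) hist \<Rightarrow> 'x) \<Rightarrow> 'k \<Rightarrow> ('a,'b) hist \<Rightarrow> 'x pmf" where
  "pure f = (\<lambda>k h. return_pmf (f (k,h)))"

lemma finite_short: "finite {h :: ('c::finite) list. length h < N}"
  by (rule finite_subset[OF _ finite_lists_length_le[of "UNIV::'c set" N]]) auto

lemma finite_Xs: "finite (Xs N :: ('k::finite \<times> ('a::finite,'b::finite) hist \<Rightarrow> 'x::finite) set)"
  unfolding Xs_def by (intro finite_PiE) (auto simp: finite_short)

lemma Xs_ne: "Xs N \<noteq> {}"
  unfolding Xs_def by (simp add: PiE_eq_empty_iff)

lemma pure_Xs:
  "(\<lambda>(k,h). if length h < N then G k h else undefined) \<in> Xs N"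
  unfolding Xs_def by (auto simp: PiE_def extensional_def)

context
  fixes lam :: real and M :: "'k::finite \<Rightarrow> 'l::finite \<Rightarrow> 'a::finite \<Rightarrow> 'b::finite \<Rightarrow> real"
    and p :: "'k \<Rightarrow> real" and q :: "'l \<Rightarrow> real"
  assumes l0: "0 < lam" and l1: "lam < 1"
    and p0: "\<forall>k. 0 < p k" and ps: "sum p UNIV = 1"
    and q0: "\<forall>l. 0 < q l" and qs: "sum q UNIV = 1"
begin

lemma purify_game1: "\<exists>f\<in>Xs N. GN lam M p q N \<sigma> \<tau> \<le> GN lam M p q N (pure f) \<tau>"
proof -
  define \<Phi> where "\<Phi> = (\<lambda>k s. \<Sum>l\<in>UNIV. q l * trunc lam M k l N s (\<tau> l))"
  have GNe: "GN lam M p q N \<sigma>' \<tau> = (\<Sum>k\<in>UNIV. p k * \<Phi> k (\<sigma>' k))" for \<sigma>'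
    unfolding GN_def \<Phi>_def by (simp add: sum_distrib_left mult.assoc)
  have aff: "\<Phi> k (s(h0 := d)) = (\<Sum>x\<in>UNIV. pmf d x * \<Phi> k (s(h0 := return_pmf x)))" for k s h0 d
    unfolding \<Phi>_def trunc_upd1[of lam M k _ N s h0 d]
    by (simp add: sum_distrib_left mult_ac sum.swap[of _ "UNIV::'a set"])
  define D where "D = {h :: ('a,'b) hist. length h < N}"
  have fD: "finite D" unfolding D_def by (rule finite_short)
  have "\<exists>g. \<Phi> k (\<sigma> k) \<le> \<Phi> k (\<lambda>h. if h \<in> D then return_pmf (g h) else \<sigma> k h)" for k
    using purify[where \<Phi>="\<Phi> k" and D=D and s="\<sigma> k", OF aff fD] by blast
  then have "\<forall>k. \<exists>g. \<Phi> k (\<sigma> k) \<le> \<Phi> k (\<lambda>h. if h \<in> D then return_pmf (g h) else \<sigma> k h)" by blast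
  then obtain G where G: "\<And>k. \<Phi> k (\<sigma> k) \<le> \<Phi> k (\<lambda>h. if h \<in> D then return_pmf (G k h) else \<sigma> k h)"
    by metis
  define f where "f = (\<lambda>(k,h). if length h < N then G k h else undefined)"
  have fX: "f \<in> Xs N" unfolding f_def by (rule pure_Xs)
  have "\<Phi> k (pure f k) = \<Phi> k (\<lambda>h. if h \<in> D then return_pmf (G k h) else \<sigma> k h)" for k
    unfolding \<Phi>_def by (intro sum.cong refl arg_cong2[where f="(*)"] trunc_cong1) (auto simp: pure_def f_def D_def)
  then have "\<Phi> k (\<sigma> k) \<le> \<Phi> k (pure f k)" for k using G by simp
  then have "GN lam M p q N \<sigma> \<tau> \<le> GN lam M p q N (pure f) \<tau>"
    unfolding GNe using p0 by (intro sum_mono mult_left_mono) (auto intro: less_imp_le)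
  then show ?thesis using fX by blast
qed

lemma purify_game2: "\<exists>g\<in>Xs N. GN lam M p q N \<sigma> (pure g) \<le> GN lam M p q N \<sigma> \<tau>"
proof -
  define \<Phi> where "\<Phi> = (\<lambda>l t. - (\<Sum>k\<in>UNIV. p k * trunc lam M k l N (\<sigma> k) t))"
  have GNe: "GN lam M p q N \<sigma> \<tau>' = - (\<Sum>l\<in>UNIV. q l * \<Phi> l (\<tau>' l))" for \<tau>'
    unfolding GN_def \<Phi>_def by (simp add: sum_distrib_left mult_ac sum_negf sum.swap[of _ "UNIV::'l set"])
  have aff: "\<Phi> l (t(h0 := d)) = (\<Sum>x\<in>UNIV. pmf d x * \<Phi> l (t(h0 := return_pmf x)))" for l t h0 d
    unfolding \<Phi>_def trunc_upd2[of lam M _ l N _ t h0 d]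
    by (simp add: sum_distrib_left mult_ac sum.swap[of _ "UNIV::'b set"] sum_negf)
  define D where "D = {h :: ('a,'b) hist. length h < N}"
  have fD: "finite D" unfolding D_def by (rule finite_short)
  have "\<exists>g. \<Phi> l (\<tau> l) \<le> \<Phi> l (\<lambda>h. if h \<in> D then return_pmf (g h) else \<tau> l h)" for l
    using purify[where \<Phi>="\<Phi> l" and D=D and s="\<tau> l", OF aff fD] by blast
  then have "\<forall>l. \<exists>g. \<Phi> l (\<tau> l) \<le> \<Phi> l (\<lambda>h. if h \<in> D then return_pmf (g h) else \<tau> l h)" by blast
  then obtain G where G: "\<And>l. \<Phi> l (\<tau> l) \<le> \<Phi> l (\<lambda>h. if h \<in> D then return_pmf (G l h) else \<tau> l h)"
    by metis
  define g where "g = (\<lambda>(l,h). if length h < N then G l h else undefined)"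
  have gX: "g \<in> Xs N" unfolding g_def by (rule pure_Xs)
  have "\<Phi> l (pure g l) = \<Phi> l (\<lambda>h. if h \<in> D then return_pmf (G l h) else \<tau> l h)" for l
    unfolding \<Phi>_def by (intro arg_cong[where f=uminus] sum.cong refl arg_cong2[where f="(*)"] trunc_cong2) (auto simp: pure_def g_def D_def)
  then have "\<Phi> l (\<tau> l) \<le> \<Phi> l (pure g l)" for l using G by simp
  then have "(\<Sum>l\<in>UNIV. q l * \<Phi> l (\<tau> l)) \<le> (\<Sum>l\<in>UNIV. q l * \<Phi> l (pure g l))"
    using q0 by (intro sum_mono mult_left_mono) (auto intro: less_imp_le)
  then have "GN lam M p q N \<sigma> (pure g) \<le> GN lam M p q N \<sigma> \<tau>"
    unfolding GNe by simp
  then show ?thesis using gX by blast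
qed


lemma mix_game1:
  assumes x: "x \<in> simp_set (Xs N :: ('k \<times> ('a,'b) hist \<Rightarrow> 'a) set)"
  shows "\<exists>\<sigma>. \<forall>\<tau>. GN lam M p q N \<sigma> \<tau> = (\<Sum>f\<in>Xs N. x f * GN lam M p q N (pure f) \<tau>)"
proof -
  have "\<exists>s. \<forall>h. plan fst s h = (\<Sum>f\<in>Xs N. x f * plan fst (pure f k) h)" for k
    using x by (intro plan_mixn finite_Xs) (auto simp: simp_set_def)
  then obtain S where S: "\<And>k h. plan fst (S k) h = (\<Sum>f\<in>Xs N. x f * plan fst (pure f k) h)"
    by metis
  have "GN lam M p q N S \<tau> = (\<Sum>f\<in>Xs N. x f * GN lam M p q N (pure f) \<tau>)" for \<tau>
    unfolding GN_def trunc_lin1[OF S]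
    by (simp add: sum_distrib_left mult_ac sum.swap[of _ "Xs N"])
  then show ?thesis by blast
qed

lemma mix_game2:
  assumes y: "y \<in> simp_set (Xs N :: ('l \<times> ('a,'b) hist \<Rightarrow> 'b) set)"
  shows "\<exists>\<tau>. \<forall>\<sigma>. GN lam M p q N \<sigma> \<tau> = (\<Sum>g\<in>Xs N. y g * GN lam M p q N \<sigma> (pure g))"
proof -
  have "\<exists>t. \<forall>h. plan snd t h = (\<Sum>g\<in>Xs N. y g * plan snd (pure g l) h)" for l
    using y by (intro plan_mixn finite_Xs) (auto simp: simp_set_def)
  then obtain T where T: "\<And>l h. plan snd (T l) h = (\<Sum>g\<in>Xs N. y g * plan snd (pure g l) h)"
    by metis
  have "GN lam M p q N \<sigma> T = (\<Sum>g\<in>Xs N. y g * GN lam M p q N \<sigma> (pure g))" for \<sigma>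
    unfolding GN_def trunc_lin2[OF T]
    by (simp add: sum_distrib_left mult_ac sum.swap[of _ "Xs N"])
  then show ?thesis by blast
qed

lemma GN_err: "\<bar>gamma_pay lam M p q \<sigma> \<tau> - GN lam M p q N \<sigma> \<tau>\<bar> \<le> (1-lam)^N * Bnd M"
proof -
  have "\<bar>gamma_pay lam M p q \<sigma> \<tau> - GN lam M p q N \<sigma> \<tau>\<bar>
     = \<bar>\<Sum>k\<in>UNIV. \<Sum>l\<in>UNIV. p k * q l * (disc_pay lam M k l (\<sigma> k) (\<tau> l) - trunc lam M k l N (\<sigma> k) (\<tau> l))\<bar>"
    unfolding gamma_pay_def GN_def by (simp add: sum_subtractf right_diff_distrib)
  also have "\<dots> \<le> (\<Sum>k\<in>UNIV. \<Sum>l\<in>UNIV. \<bar>p k * q l * (disc_pay lam M k l (\<sigma> k) (\<tau> l) - trunc lam M k l N (\<sigma> k) (\<tau> l))\<bar>)"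
    by (rule order.trans[OF sum_abs]) (intro sum_mono sum_abs)
  also have "\<dots> \<le> (\<Sum>k\<in>UNIV. \<Sum>l\<in>UNIV. p k * q l * ((1-lam)^N * Bnd M))"
    using p0 q0 trunc_err[OF l0 l1]
    by (intro sum_mono) (auto simp: abs_mult less_imp_le intro!: mult_left_mono mult_nonneg_nonneg)
  also have "\<dots> = (1-lam)^N * Bnd M"
    by (simp add: sum_distrib_right[symmetric] sum_distrib_left[symmetric] ps qs)
  finally show ?thesis .
qed

lemma game_saddle:
  assumes e: "0 < \<epsilon>"
  shows "\<exists>\<sigma>h \<tau>h. \<forall>\<sigma> \<tau>. gamma_pay lam M p q \<sigma> \<tau>h \<le> gamma_pay lam M p q \<sigma>h \<tau> + \<epsilon>"
proof -
  have "0 < \<epsilon> / (3 * (Bnd M + 1))" using e Bnd_nonneg[of M] by simp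
  then obtain N where N: "(1-lam)^N < \<epsilon> / (3 * (Bnd M + 1))"
    using real_arch_pow_inv[of _ "1-lam"] l0 by auto
  have "(1-lam)^N * Bnd M \<le> (1-lam)^N * (Bnd M + 1)"
    using l1 by (intro mult_left_mono) auto
  also have "\<dots> \<le> \<epsilon> / 3"
    using N Bnd_nonneg[of M] by (simp add: field_simps)
  finally have err: "\<bar>gamma_pay lam M p q \<sigma> \<tau> - GN lam M p q N \<sigma> \<tau>\<bar> \<le> \<epsilon> / 3" for \<sigma> \<tau>
    using GN_err[of \<sigma> \<tau> N] by linarith
  define XX where "XX = (Xs N :: ('k \<times> ('a,'b) hist \<Rightarrow> 'a) set)"
  define YY where "YY = (Xs N :: ('l \<times> ('a,'b) hist \<Rightarrow> 'b) set)"
  define A where "A = (\<lambda>f g. GN lam M p q N (pure f) (pure g))"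
  obtain x y where x: "x \<in> simp_set XX" and y: "y \<in> simp_set YY"
    and sad: "\<forall>f\<in>XX. \<forall>g\<in>YY. rowv YY A y f \<le> colv XX A x g + \<epsilon>/3"
  proof -
    have "finite XX" "finite YY" "XX \<noteq> {}" "YY \<noteq> {}"
      unfolding XX_def YY_def by (rule finite_Xs Xs_ne)+
    from minimax_saddle[OF this, of "\<epsilon>/3" A] e that show ?thesis by auto
  qed
  obtain \<sigma>h where \<sigma>h: "\<And>\<tau>. GN lam M p q N \<sigma>h \<tau> = (\<Sum>f\<in>XX. x f * GN lam M p q N (pure f) \<tau>)"
    using mix_game1[OF x[unfolded XX_def]] unfolding XX_def by blast
  obtain \<tau>h where \<tau>h: "\<And>\<sigma>. GN lam M p q N \<sigma> \<tau>h = (\<Sum>g\<in>YY. y g * GN lam M p q N \<sigma> (pure g))"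
    using mix_game2[OF y[unfolded YY_def]] unfolding YY_def by blast
  have "gamma_pay lam M p q \<sigma> \<tau>h \<le> gamma_pay lam M p q \<sigma>h \<tau> + \<epsilon>" for \<sigma> \<tau>
  proof -
    obtain f where f: "f \<in> XX" "GN lam M p q N \<sigma> \<tau>h \<le> GN lam M p q N (pure f) \<tau>h"
      using purify_game1 unfolding XX_def by blast
    obtain g where g: "g \<in> YY" "GN lam M p q N \<sigma>h (pure g) \<le> GN lam M p q N \<sigma>h \<tau>"
      using purify_game2 unfolding YY_def by blast
    have "GN lam M p q N (pure f) \<tau>h = rowv YY A y f"
      unfolding \<tau>h rowv_def A_def by simp
    moreover have "GN lam M p q N \<sigma>h (pure g) = colv XX A x g"
      unfolding \<sigma>h colv_def A_def by simp
    ultimately have "GN lam M p q N \<sigma> \<tau>h \<le> GN lam M p q N \<sigma>h \<tau> + \<epsilon>/3"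
      using f g sad[rule_format, OF f(1) g(1)] by linarith
    then show ?thesis using err[of \<sigma> \<tau>h] err[of \<sigma>h \<tau>] by linarith
  qed
  then show ?thesis by blast
qed

end




lemma avg_bound:
  assumes "finite I" "\<forall>i\<in>I. 0 \<le> w i" "sum w I = 1" "\<forall>i\<in>I. \<bar>c i\<bar> \<le> K"
  shows "\<bar>\<Sum>i\<in>I. w i * c i\<bar> \<le> (K::real)"
proof -
  have "\<bar>\<Sum>i\<in>I. w i * c i\<bar> \<le> (\<Sum>i\<in>I. \<bar>w i * c i\<bar>)" by (rule sum_abs)
  also have "\<dots> \<le> (\<Sum>i\<in>I. w i * K)"
    using assms by (intro sum_mono) (auto simp: abs_mult intro!: mult_left_mono)
  also have "\<dots> = K" using assms by (simp add: sum_distrib_right[symmetric])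
  finally show ?thesis .
qed

lemma bdd_above_abs: "(\<And>x. x \<in> S \<Longrightarrow> \<bar>f x\<bar> \<le> (K::real)) \<Longrightarrow> bdd_above (f ` S)"
  by (rule bdd_aboveI[of _ K]) (auto dest!: abs_le_D1)
lemma bdd_below_abs:
  assumes "\<And>x. x \<in> S \<Longrightarrow> \<bar>f x\<bar> \<le> (K::real)"
  shows "bdd_below (f ` S)"
proof (rule bdd_belowI[of _ "-K"])
  fix y assume "y \<in> f ` S"
  then obtain x where x: "x \<in> S" "y = f x" by blast
  show "- K \<le> y" using abs_le_D2[OF assms[OF x(1)]] x(2) by linarith
qed
lemma abs_SUP_le:
  assumes "S \<noteq> {}" "\<And>x. x \<in> S \<Longrightarrow> \<bar>f x\<bar> \<le> (K::real)"
  shows "\<bar>SUP x\<in>S. f x\<bar> \<le> K"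
proof -
  obtain x where x: "x \<in> S" using assms(1) by blast
  have "(SUP x\<in>S. f x) \<le> K" by (rule cSUP_least[OF assms(1)]) (use assms(2) abs_le_D1 in blast)
  moreover have "f x \<le> (SUP x\<in>S. f x)" by (rule cSUP_upper[OF x bdd_above_abs[OF assms(2)]])
  moreover have "- K \<le> f x" using abs_le_D2[OF assms(2)[OF x]] by linarith
  ultimately show ?thesis by linarith
qed
lemma abs_INF_le:
  assumes "S \<noteq> {}" "\<And>x. x \<in> S \<Longrightarrow> \<bar>f x\<bar> \<le> (K::real)"
  shows "\<bar>INF x\<in>S. f x\<bar> \<le> K"
proof -
  obtain x where x: "x \<in> S" using assms(1) by blast
  have "-K \<le> (INF x\<in>S. f x)"
  proof (rule cINF_greatest[OF assms(1)])
    fix y assume y: "y \<in> S" then show "- K \<le> f y" using abs_le_D2[OF assms(2)[OF y]] by linarith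
  qed
  moreover have "(INF x\<in>S. f x) \<le> f x" by (rule cINF_lower[OF bdd_below_abs[OF assms(2)] x])
  moreover have "f x \<le> K" using abs_le_D1[OF assms(2)[OF x]] .
  ultimately show ?thesis by linarith
qed

theorem lemma3:
  fixes M :: "'k::finite \<Rightarrow> 'l::finite \<Rightarrow> 'a::finite \<Rightarrow> 'b::finite \<Rightarrow> real"
    and p :: "'k \<Rightarrow> real" and q :: "'l \<Rightarrow> real" and lam :: real
    and \<sigma>s :: "'k \<Rightarrow> ('a,'b) strat1" and \<tau>s :: "'l \<Rightarrow> ('a,'b) strat2"
  assumes "0 < lam" and "lam < 1"
    and "\<forall>k. 0 < p k" and "sum p UNIV = 1"
    and "\<forall>l. 0 < q l" and "sum q UNIV = 1"
    and "security1 lam M p q \<sigma>s" and "security2 lam M p q \<tau>s"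
  shows "(\<forall>\<mu>. V1_dual lam M (\<lambda>k. - w_val lam M q \<tau>s k) q
                 - (\<Sum>k\<in>UNIV. p k * (- w_val lam M q \<tau>s k))
             \<le> V1_dual lam M \<mu> q - (\<Sum>k\<in>UNIV. p k * \<mu> k))
       \<and> (\<forall>\<nu>. V2_dual lam M p \<nu> - (\<Sum>l\<in>UNIV. q l * \<nu> l)
             \<le> V2_dual lam M p (\<lambda>l. - u_val lam M p \<sigma>s l)
                 - (\<Sum>l\<in>UNIV. q l * (- u_val lam M p \<sigma>s l)))"
proof -
  note l0 = assms(1) and l1 = assms(2) and p0 = assms(3) and ps = assms(4)
    and q0 = assms(5) and qs = assms(6) and sec1 = assms(7) and sec2 = assms(8)
  have p0': "\<forall>k. 0 \<le> p k" and q0': "\<forall>l. 0 \<le> q l" using p0 q0 by (auto intro: less_imp_le)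
  define Bd where "Bd = Bnd M"
  define G where "G = gamma_pay lam M p q"
  have dB: "\<bar>disc_pay lam M k l s t\<bar> \<le> Bd" for k l s t
    unfolding Bd_def by (rule disc_bound[OF l0 l1])
  have qB: "\<bar>\<Sum>l\<in>UNIV. q l * disc_pay lam M k l s (\<tau> l)\<bar> \<le> Bd" for k s \<tau>
    using q0' qs dB by (intro avg_bound) auto
  have pB: "\<bar>\<Sum>k\<in>UNIV. p k * disc_pay lam M k l (\<sigma> k) t\<bar> \<le> Bd" for l t \<sigma>
    using p0' ps dB by (intro avg_bound) auto
  have Gsplit: "G \<sigma> \<tau> = (\<Sum>k\<in>UNIV. p k * (\<Sum>l\<in>UNIV. q l * disc_pay lam M k l (\<sigma> k) (\<tau> l)))" for \<sigma> \<tau>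
    unfolding G_def gamma_pay_def by (simp add: sum_distrib_left mult.assoc)
  have Gsplit2: "G \<sigma> \<tau> = (\<Sum>l\<in>UNIV. q l * (\<Sum>k\<in>UNIV. p k * disc_pay lam M k l (\<sigma> k) (\<tau> l)))" for \<sigma> \<tau>
    unfolding G_def gamma_pay_def by (simp add: sum_distrib_left mult_ac sum.swap[of _ "UNIV::'l set"])
  have GB: "\<bar>G \<sigma> \<tau>\<bar> \<le> Bd" for \<sigma> \<tau>
    unfolding Gsplit using p0' ps qB by (intro avg_bound) auto
  define Vlow where "Vlow = (SUP \<sigma>. INF \<tau>. G \<sigma> \<tau>)"
  define Vup where "Vup = (INF \<tau>. SUP \<sigma>. G \<sigma> \<tau>)"
  have infB: "\<bar>INF \<tau>. G \<sigma> \<tau>\<bar> \<le> Bd" for \<sigma> by (rule abs_INF_le) (auto simp: GB)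
  have supB: "\<bar>SUP \<sigma>. G \<sigma> \<tau>\<bar> \<le> Bd" for \<tau> by (rule abs_SUP_le) (auto simp: GB)
  have le_Vlow: "(INF \<tau>. G \<sigma> \<tau>) \<le> Vlow" for \<sigma>
    unfolding Vlow_def by (rule cSUP_upper) (auto intro: bdd_above_abs infB)
  have G_le_sup: "G \<sigma> \<tau> \<le> (SUP \<sigma>. G \<sigma> \<tau>)" for \<sigma> \<tau>
    by (rule cSUP_upper) (auto intro: bdd_above_abs GB)
  have inf_le_G: "(INF \<tau>. G \<sigma> \<tau>) \<le> G \<sigma> \<tau>" for \<sigma> \<tau>
    by (rule cINF_lower) (auto intro: bdd_below_abs GB)
  have minimax: "Vup \<le> Vlow"
  proof (rule field_le_epsilon)
    fix \<epsilon> :: real assume e: "0 < \<epsilon>"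
    obtain \<sigma>h \<tau>h where sad: "\<And>\<sigma> \<tau>. G \<sigma> \<tau>h \<le> G \<sigma>h \<tau> + \<epsilon>"
      using game_saddle[OF l0 l1 p0 ps q0 qs e] unfolding G_def by blast
    have "Vup \<le> (SUP \<sigma>. G \<sigma> \<tau>h)"
      unfolding Vup_def by (rule cINF_lower) (auto intro: bdd_below_abs supB)
    also have "\<dots> \<le> (INF \<tau>. G \<sigma>h \<tau>) + \<epsilon>"
    proof (rule cSUP_least)
      fix \<sigma>
      have "G \<sigma> \<tau>h - \<epsilon> \<le> (INF \<tau>. G \<sigma>h \<tau>)"
        by (rule cINF_greatest) (use sad in \<open>auto simp: algebra_simps\<close>)
      then show "G \<sigma> \<tau>h \<le> (INF \<tau>. G \<sigma>h \<tau>) + \<epsilon>" by linarith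
    qed simp
    also have "\<dots> \<le> Vlow + \<epsilon>" using le_Vlow[of \<sigma>h] by linarith
    finally show "Vup \<le> Vlow + \<epsilon>" .
  qed
  have psimp: "p \<in> prob_simplex" and qsimp: "q \<in> prob_simplex"
    using p0' ps q0' qs by (auto simp: prob_simplex_def)
  define W where "W = w_val lam M q \<tau>s"
  have Wdef: "W k = (SUP s. \<Sum>l\<in>UNIV. q l * disc_pay lam M k l s (\<tau>s l))" for k
    unfolding W_def w_val_def by simp
  have W_ge: "(\<Sum>l\<in>UNIV. q l * disc_pay lam M k l s (\<tau>s l)) \<le> W k" for k s
    unfolding Wdef by (rule cSUP_upper) (auto intro: bdd_above_abs qB)
  define \<Phi> where "\<Phi> = (\<lambda>\<mu> \<pi> \<sigma> \<tau>. \<Sum>k\<in>UNIV. \<pi> k * (\<mu> k + (\<Sum>l\<in>UNIV. q l * disc_pay lam M k l (\<sigma> k) (\<tau> l))))"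
  have V1e: "V1_dual lam M \<mu> q = (SUP \<pi>\<in>prob_simplex. SUP \<sigma>. INF \<tau>. \<Phi> \<mu> \<pi> \<sigma> \<tau>)" for \<mu>
    unfolding V1_dual_def \<Phi>_def by simp
  define K1 where "K1 = (\<lambda>\<mu>::'k \<Rightarrow> real. (\<Sum>k\<in>UNIV. \<bar>\<mu> k\<bar>) + Bd)"
  have \<Phi>B: "\<bar>\<Phi> \<mu> \<pi> \<sigma> \<tau>\<bar> \<le> K1 \<mu>" if "\<pi> \<in> prob_simplex" for \<mu> \<pi> \<sigma> \<tau>
    unfolding \<Phi>_def
  proof (rule avg_bound)
    show "\<forall>i\<in>UNIV. 0 \<le> \<pi> i" "sum \<pi> UNIV = 1" using that by (auto simp: prob_simplex_def)
    show "\<forall>i\<in>UNIV. \<bar>\<mu> i + (\<Sum>l\<in>UNIV. q l * disc_pay lam M i l (\<sigma> i) (\<tau> l))\<bar> \<le> K1 \<mu>"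
    proof
      fix i
      have "\<bar>\<mu> i\<bar> \<le> (\<Sum>k\<in>UNIV. \<bar>\<mu> k\<bar>)" by (rule member_le_sum) auto
      then show "\<bar>\<mu> i + (\<Sum>l\<in>UNIV. q l * disc_pay lam M i l (\<sigma> i) (\<tau> l))\<bar> \<le> K1 \<mu>"
        using qB[of i "\<sigma> i" \<tau>] unfolding K1_def by linarith
    qed
  qed simp
  have \<Phi>infB: "\<bar>INF \<tau>. \<Phi> \<mu> \<pi> \<sigma> \<tau>\<bar> \<le> K1 \<mu>" if "\<pi> \<in> prob_simplex" for \<mu> \<pi> \<sigma>
    by (rule abs_INF_le) (auto intro: \<Phi>B[OF that])
  have \<Phi>supB: "\<bar>SUP \<sigma>. INF \<tau>. \<Phi> \<mu> \<pi> \<sigma> \<tau>\<bar> \<le> K1 \<mu>" if "\<pi> \<in> prob_simplex" for \<mu> \<pi>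
    by (rule abs_SUP_le) (auto intro: \<Phi>infB[OF that])
  have partA: "V1_dual lam M (\<lambda>k. - W k) q \<le> 0"
    unfolding V1e
  proof (rule cSUP_least)
    show "(prob_simplex :: ('k \<Rightarrow> real) set) \<noteq> {}" using psimp by auto
    fix \<pi> :: "'k \<Rightarrow> real" assume \<pi>: "\<pi> \<in> prob_simplex"
    show "(SUP \<sigma>. INF \<tau>. \<Phi> (\<lambda>k. - W k) \<pi> \<sigma> \<tau>) \<le> 0"
    proof (rule cSUP_least)
      fix \<sigma>
      have "(INF \<tau>. \<Phi> (\<lambda>k. - W k) \<pi> \<sigma> \<tau>) \<le> \<Phi> (\<lambda>k. - W k) \<pi> \<sigma> \<tau>s"
        by (rule cINF_lower) (auto intro: bdd_below_abs \<Phi>B[OF \<pi>])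
      also have "\<dots> \<le> 0"
        unfolding \<Phi>_def
      proof (rule sum_nonpos)
        fix k
        have "0 \<le> \<pi> k" using \<pi> by (auto simp: prob_simplex_def)
        moreover have "- W k + (\<Sum>l\<in>UNIV. q l * disc_pay lam M k l (\<sigma> k) (\<tau>s l)) \<le> 0"
          using W_ge[of k "\<sigma> k"] by linarith
        ultimately show "\<pi> k * (- W k + (\<Sum>l\<in>UNIV. q l * disc_pay lam M k l (\<sigma> k) (\<tau>s l))) \<le> 0"
          by (simp add: mult_nonneg_nonpos)
      qed
      finally show "(INF \<tau>. \<Phi> (\<lambda>k. - W k) \<pi> \<sigma> \<tau>) \<le> 0" .
    qed simp
  qed
  have partB: "(\<Sum>k\<in>UNIV. p k * W k) \<le> Vup"
  proof (rule field_le_epsilon)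
    fix \<epsilon> :: real assume e: "0 < \<epsilon>"
    have "\<exists>s. W k - \<epsilon> < (\<Sum>l\<in>UNIV. q l * disc_pay lam M k l s (\<tau>s l))" for k
    proof -
      have "W k - \<epsilon> < W k" using e by simp
      then show ?thesis unfolding Wdef
        by (subst (asm) less_cSUP_iff) (auto intro: bdd_above_abs qB)
    qed
    then obtain S where S: "\<And>k. W k - \<epsilon> < (\<Sum>l\<in>UNIV. q l * disc_pay lam M k l (S k) (\<tau>s l))"
      by metis
    have "(\<Sum>k\<in>UNIV. p k * (W k - \<epsilon>)) \<le> G S \<tau>s"
      unfolding Gsplit using p0' S by (intro sum_mono mult_left_mono) (auto intro: less_imp_le)
    also have "\<dots> \<le> (SUP \<sigma>. G \<sigma> \<tau>s)" by (rule G_le_sup)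
    also have "\<dots> = Vup" using sec2 unfolding security2_def Vup_def G_def by simp
    finally show "(\<Sum>k\<in>UNIV. p k * W k) \<le> Vup + \<epsilon>"
      using ps by (simp add: right_diff_distrib sum_subtractf sum_distrib_right[symmetric])
  qed
  have partD: "Vlow \<le> V1_dual lam M \<mu> q - (\<Sum>k\<in>UNIV. p k * \<mu> k)" for \<mu>
    unfolding Vlow_def
  proof (rule cSUP_least)
    fix \<sigma>
    have "(\<Sum>k\<in>UNIV. p k * \<mu> k) + (INF \<tau>. G \<sigma> \<tau>) \<le> (INF \<tau>. \<Phi> \<mu> p \<sigma> \<tau>)"
    proof (rule cINF_greatest)
      fix \<tau>
      have "\<Phi> \<mu> p \<sigma> \<tau> = (\<Sum>k\<in>UNIV. p k * \<mu> k) + G \<sigma> \<tau>"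
        unfolding \<Phi>_def Gsplit by (simp add: distrib_left sum.distrib)
      then show "(\<Sum>k\<in>UNIV. p k * \<mu> k) + (INF \<tau>. G \<sigma> \<tau>) \<le> \<Phi> \<mu> p \<sigma> \<tau>"
        using inf_le_G[of \<sigma> \<tau>] by linarith
    qed simp
    also have "\<dots> \<le> (SUP \<sigma>. INF \<tau>. \<Phi> \<mu> p \<sigma> \<tau>)"
      by (rule cSUP_upper) (auto intro: bdd_above_abs \<Phi>infB[OF psimp])
    also have "\<dots> \<le> V1_dual lam M \<mu> q"
      unfolding V1e by (rule cSUP_upper[OF psimp]) (auto intro: bdd_above_abs \<Phi>supB)
    finally show "(INF \<tau>. G \<sigma> \<tau>) \<le> V1_dual lam M \<mu> q - (\<Sum>k\<in>UNIV. p k * \<mu> k)" by linarith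
  qed simp
  have part1: "V1_dual lam M (\<lambda>k. - w_val lam M q \<tau>s k) q
                 - (\<Sum>k\<in>UNIV. p k * (- w_val lam M q \<tau>s k))
             \<le> V1_dual lam M \<mu> q - (\<Sum>k\<in>UNIV. p k * \<mu> k)" for \<mu>
  proof -
    have "V1_dual lam M (\<lambda>k. - w_val lam M q \<tau>s k) q - (\<Sum>k\<in>UNIV. p k * (- w_val lam M q \<tau>s k))
        = V1_dual lam M (\<lambda>k. - W k) q + (\<Sum>k\<in>UNIV. p k * W k)"
      unfolding W_def by (simp add: sum_negf)
    then show ?thesis using partA partB minimax partD[of \<mu>] by linarith
  qed
  define U where "U = u_val lam M p \<sigma>s"
  have Udef: "U l = (INF t. \<Sum>k\<in>UNIV. p k * disc_pay lam M k l (\<sigma>s k) t)" for l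
    unfolding U_def u_val_def by simp
  have U_le: "U l \<le> (\<Sum>k\<in>UNIV. p k * disc_pay lam M k l (\<sigma>s k) t)" for l t
    unfolding Udef by (rule cINF_lower) (auto intro: bdd_below_abs pB)
  define \<Psi> where "\<Psi> = (\<lambda>\<nu> \<sigma> \<rho> \<tau>. \<Sum>k\<in>UNIV. p k * (\<Sum>l\<in>UNIV. \<rho> l * (\<nu> l + disc_pay lam M k l (\<sigma> k) (\<tau> l))))"
  have V2e: "V2_dual lam M p \<nu> = (SUP \<sigma>. INF \<rho>\<in>prob_simplex. INF \<tau>. \<Psi> \<nu> \<sigma> \<rho> \<tau>)" for \<nu>
    unfolding V2_dual_def \<Psi>_def by simp
  define K2 where "K2 = (\<lambda>\<nu>::'l \<Rightarrow> real. (\<Sum>l\<in>UNIV. \<bar>\<nu> l\<bar>) + Bd)"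
  have \<Psi>B: "\<bar>\<Psi> \<nu> \<sigma> \<rho> \<tau>\<bar> \<le> K2 \<nu>" if "\<rho> \<in> prob_simplex" for \<nu> \<sigma> \<rho> \<tau>
    unfolding \<Psi>_def
  proof (rule avg_bound)
    show "\<forall>i\<in>UNIV. 0 \<le> p i" "sum p UNIV = 1" using p0' ps by auto
    show "\<forall>i\<in>UNIV. \<bar>\<Sum>l\<in>UNIV. \<rho> l * (\<nu> l + disc_pay lam M i l (\<sigma> i) (\<tau> l))\<bar> \<le> K2 \<nu>"
    proof
      fix i
      show "\<bar>\<Sum>l\<in>UNIV. \<rho> l * (\<nu> l + disc_pay lam M i l (\<sigma> i) (\<tau> l))\<bar> \<le> K2 \<nu>"
      proof (rule avg_bound)
        show "\<forall>i\<in>UNIV. 0 \<le> \<rho> i" "sum \<rho> UNIV = 1" using that by (auto simp: prob_simplex_def)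
        show "\<forall>l\<in>UNIV. \<bar>\<nu> l + disc_pay lam M i l (\<sigma> i) (\<tau> l)\<bar> \<le> K2 \<nu>"
        proof
          fix l
          have "\<bar>\<nu> l\<bar> \<le> (\<Sum>l\<in>UNIV. \<bar>\<nu> l\<bar>)" by (rule member_le_sum) auto
          then show "\<bar>\<nu> l + disc_pay lam M i l (\<sigma> i) (\<tau> l)\<bar> \<le> K2 \<nu>"
            using dB[of i l "\<sigma> i" "\<tau> l"] unfolding K2_def by linarith
        qed
      qed simp
    qed
  qed simp
  have \<Psi>infB: "\<bar>INF \<tau>. \<Psi> \<nu> \<sigma> \<rho> \<tau>\<bar> \<le> K2 \<nu>" if "\<rho> \<in> prob_simplex" for \<nu> \<sigma> \<rho>
    by (rule abs_INF_le) (auto intro: \<Psi>B[OF that])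
  have \<Psi>inf2B: "\<bar>INF \<rho>\<in>prob_simplex. INF \<tau>. \<Psi> \<nu> \<sigma> \<rho> \<tau>\<bar> \<le> K2 \<nu>" for \<nu> \<sigma>
  proof -
    have ne: "(prob_simplex :: ('l \<Rightarrow> real) set) \<noteq> {}" using qsimp by auto
    show ?thesis by (rule abs_INF_le[OF ne \<Psi>infB])
  qed
  have \<Psi>q: "\<Psi> \<nu> \<sigma> q \<tau> = (\<Sum>l\<in>UNIV. q l * \<nu> l) + G \<sigma> \<tau>" for \<nu> \<sigma> \<tau>
  proof -
    have "\<Psi> \<nu> \<sigma> q \<tau> = (\<Sum>k\<in>UNIV. p k * (\<Sum>l\<in>UNIV. q l * \<nu> l)) + (\<Sum>k\<in>UNIV. p k * (\<Sum>l\<in>UNIV. q l * disc_pay lam M k l (\<sigma> k) (\<tau> l)))"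
      unfolding \<Psi>_def by (simp add: distrib_left sum.distrib)
    also have "(\<Sum>k\<in>UNIV. p k * (\<Sum>l\<in>UNIV. q l * \<nu> l)) = (\<Sum>l\<in>UNIV. q l * \<nu> l)"
      using ps by (simp add: sum_distrib_right[symmetric])
    finally show ?thesis unfolding Gsplit by simp
  qed
  have partE: "V2_dual lam M p \<nu> \<le> (\<Sum>l\<in>UNIV. q l * \<nu> l) + Vlow" for \<nu>
    unfolding V2e
  proof (rule cSUP_least)
    fix \<sigma>
    have "(INF \<rho>\<in>prob_simplex. INF \<tau>. \<Psi> \<nu> \<sigma> \<rho> \<tau>) \<le> (INF \<tau>. \<Psi> \<nu> \<sigma> q \<tau>)"
      by (rule cINF_lower[OF _ qsimp]) (auto intro: bdd_below_abs \<Psi>infB)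
    also have "\<dots> \<le> (\<Sum>l\<in>UNIV. q l * \<nu> l) + (INF \<tau>. G \<sigma> \<tau>)"
    proof -
      have "(INF \<tau>. \<Psi> \<nu> \<sigma> q \<tau>) - (\<Sum>l\<in>UNIV. q l * \<nu> l) \<le> (INF \<tau>. G \<sigma> \<tau>)"
      proof (rule cINF_greatest)
        fix \<tau>
        have "(INF \<tau>. \<Psi> \<nu> \<sigma> q \<tau>) \<le> \<Psi> \<nu> \<sigma> q \<tau>"
          by (rule cINF_lower) (auto intro: bdd_below_abs \<Psi>B[OF qsimp])
        then show "(INF \<tau>. \<Psi> \<nu> \<sigma> q \<tau>) - (\<Sum>l\<in>UNIV. q l * \<nu> l) \<le> G \<sigma> \<tau>"
          using \<Psi>q by simp
      qed simp
      then show ?thesis by linarith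
    qed
    also have "\<dots> \<le> (\<Sum>l\<in>UNIV. q l * \<nu> l) + Vlow" using le_Vlow[of \<sigma>] by linarith
    finally show "(INF \<rho>\<in>prob_simplex. INF \<tau>. \<Psi> \<nu> \<sigma> \<rho> \<tau>) \<le> (\<Sum>l\<in>UNIV. q l * \<nu> l) + Vlow" .
  qed simp
  have partF: "0 \<le> V2_dual lam M p (\<lambda>l. - U l)"
  proof -
    have "0 \<le> (INF \<rho>\<in>prob_simplex. INF \<tau>. \<Psi> (\<lambda>l. - U l) \<sigma>s \<rho> \<tau>)"
    proof (rule cINF_greatest)
      show "(prob_simplex :: ('l \<Rightarrow> real) set) \<noteq> {}" using qsimp by auto
      fix \<rho> :: "'l \<Rightarrow> real" assume \<rho>: "\<rho> \<in> prob_simplex"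
      show "0 \<le> (INF \<tau>. \<Psi> (\<lambda>l. - U l) \<sigma>s \<rho> \<tau>)"
      proof (rule cINF_greatest)
        fix \<tau>
        have "\<Psi> (\<lambda>l. - U l) \<sigma>s \<rho> \<tau> = (\<Sum>l\<in>UNIV. \<rho> l * ((\<Sum>k\<in>UNIV. p k * disc_pay lam M k l (\<sigma>s k) (\<tau> l)) - U l))"
        proof -
          have "\<Psi> (\<lambda>l. - U l) \<sigma>s \<rho> \<tau> = (\<Sum>k\<in>UNIV. p k * ((\<Sum>l\<in>UNIV. \<rho> l * disc_pay lam M k l (\<sigma>s k) (\<tau> l)) - (\<Sum>l\<in>UNIV. \<rho> l * U l)))"
            unfolding \<Psi>_def by (intro sum.cong refl arg_cong2[where f="(*)"]) (simp add: algebra_simps sum_subtractf)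
          also have "\<dots> = (\<Sum>k\<in>UNIV. p k * (\<Sum>l\<in>UNIV. \<rho> l * disc_pay lam M k l (\<sigma>s k) (\<tau> l))) - (\<Sum>l\<in>UNIV. \<rho> l * U l)"
            using ps by (simp add: right_diff_distrib sum_subtractf sum_distrib_right[symmetric])
          also have "(\<Sum>k\<in>UNIV. p k * (\<Sum>l\<in>UNIV. \<rho> l * disc_pay lam M k l (\<sigma>s k) (\<tau> l)))
              = (\<Sum>l\<in>UNIV. \<rho> l * (\<Sum>k\<in>UNIV. p k * disc_pay lam M k l (\<sigma>s k) (\<tau> l)))"
            by (simp add: sum_distrib_left mult_ac sum.swap[of _ "UNIV::'l set"])
          finally show ?thesis by (simp add: right_diff_distrib sum_subtractf)
        qed
        also have "0 \<le> \<dots>"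
          using \<rho> U_le by (intro sum_nonneg mult_nonneg_nonneg) (auto simp: prob_simplex_def)
        finally show "0 \<le> \<Psi> (\<lambda>l. - U l) \<sigma>s \<rho> \<tau>" by simp
      qed simp
    qed
    also have "\<dots> \<le> V2_dual lam M p (\<lambda>l. - U l)"
      unfolding V2e by (rule cSUP_upper) (auto intro: bdd_above_abs \<Psi>inf2B)
    finally show ?thesis .
  qed
  have partG: "Vlow \<le> (\<Sum>l\<in>UNIV. q l * U l)"
  proof (rule field_le_epsilon)
    fix \<epsilon> :: real assume e: "0 < \<epsilon>"
    have "\<exists>t. (\<Sum>k\<in>UNIV. p k * disc_pay lam M k l (\<sigma>s k) t) < U l + \<epsilon>" for l
    proof -
      have "U l < U l + \<epsilon>" using e by simp
      then show ?thesis unfolding Udef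
        by (subst (asm) cINF_less_iff) (auto intro: bdd_below_abs pB)
    qed
    then obtain T where T: "\<And>l. (\<Sum>k\<in>UNIV. p k * disc_pay lam M k l (\<sigma>s k) (T l)) < U l + \<epsilon>"
      by metis
    have "Vlow = (INF \<tau>. G \<sigma>s \<tau>)" using sec1 unfolding security1_def Vlow_def G_def by simp
    also have "\<dots> \<le> G \<sigma>s T" by (rule inf_le_G)
    also have "\<dots> \<le> (\<Sum>l\<in>UNIV. q l * (U l + \<epsilon>))"
      unfolding Gsplit2 using q0' T by (intro sum_mono mult_left_mono) (auto intro: less_imp_le)
    also have "\<dots> = (\<Sum>l\<in>UNIV. q l * U l) + \<epsilon>"
      using qs by (simp add: distrib_left sum.distrib sum_distrib_right[symmetric])
    finally show "Vlow \<le> (\<Sum>l\<in>UNIV. q l * U l) + \<epsilon>" .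
  qed
  have part2: "V2_dual lam M p \<nu> - (\<Sum>l\<in>UNIV. q l * \<nu> l)
             \<le> V2_dual lam M p (\<lambda>l. - u_val lam M p \<sigma>s l)
                 - (\<Sum>l\<in>UNIV. q l * (- u_val lam M p \<sigma>s l))" for \<nu>
  proof -
    have "V2_dual lam M p (\<lambda>l. - u_val lam M p \<sigma>s l) - (\<Sum>l\<in>UNIV. q l * (- u_val lam M p \<sigma>s l))
        = V2_dual lam M p (\<lambda>l. - U l) + (\<Sum>l\<in>UNIV. q l * U l)"
      unfolding U_def by (simp add: sum_negf)
    then show ?thesis using partE[of \<nu>] partF partG by linarith
  qed
  show ?thesis using part1 part2 by blast
qed


end
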